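(* Let $\mathcal Q$ be the mean-zero Gaussian field on $\mathbb T^2$ with covariance $\mathbf E[\mathcal Q(x)\mathcal Q(y)]=G(x-y)$. Then for every $\kappa>0$ and $p\ge1$, $\mathbf E\|\mathcal Q\|_{\mathbf C^{-\kappa}}^p\lesssim1$.
   Context: $\mathbf m>0$; $C=(\mathbf m-\Delta)^{-1}$ is the Green's function kernel on $\mathbb T^2$, $C^2$ its pointwise square, and $G$ is determined by $C^2*G+G=2C^2$ (equivalently $\widehat G=2\widehat{C^2}/(1+\widehat{C^2})$ in Fourier variables). $\mathbf C^{-\kappa}=B^{-\kappa}_{\infty,\infty}(\mathbb T^2)$. *)

theory Defs
  imports "HOL-Probability.Probability"
begin

text \<open>Torus T^2 = R^2/Z^2 (unit volume), characters e_k(x) = exp(2 pi i k.x), k in Z^2.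
  Fourier coefficients: f^(k) = integral over T^2 of f e_{-k}.\<close>

definition zneg :: "int \<times> int \<Rightarrow> int \<times> int" where
  "zneg k = (- fst k, - snd k)"

definition zsub :: "int \<times> int \<Rightarrow> int \<times> int \<Rightarrow> int \<times> int" where
  "zsub k l = (fst k - fst l, snd k - snd l)"

definition zsq :: "int \<times> int \<Rightarrow> real" where
  "zsq k = real_of_int (fst k)^2 + real_of_int (snd k)^2"

text \<open>Fourier coefficients of the Green's function C = (m - Laplacian)^{-1}.\<close>
definition Chat :: "real \<Rightarrow> int \<times> int \<Rightarrow> real" where
  "Chat m k = 1 / (m + 4 * pi^2 * zsq k)"

text \<open>Fourier coefficients of the pointwise square C^2 (convolution of coefficients).\<close>
definition C2hat :: "real \<Rightarrow> int \<times> int \<Rightarrow> real" where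
  "C2hat m k = infsum (\<lambda>l. Chat m l * Chat m (zsub k l)) UNIV"

text \<open>Fourier coefficients of G, determined by C^2 * G + G = 2 C^2.\<close>
definition Ghat :: "real \<Rightarrow> int \<times> int \<Rightarrow> real" where
  "Ghat m k = 2 * C2hat m k / (1 + C2hat m k)"

text \<open>C-infinity functions on R^2: continuous, and all partial derivatives exist and are
  again C-infinity (coinductively: partial derivatives of all orders exist and are continuous).\<close>
coinductive smooth_fn :: "(real \<times> real \<Rightarrow> real) \<Rightarrow> bool" where
  "continuous_on UNIV f \<Longrightarrow>
   (\<forall>b\<in>(Basis :: (real \<times> real) set). \<exists>g. (\<forall>x. ((\<lambda>t. f (x + t *\<^sub>R b)) has_real_derivative g x) (at 0))
        \<and> smooth_fn g) \<Longrightarrow> smooth_fn f"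

definition dyadic_pou :: "(real \<times> real \<Rightarrow> real) \<Rightarrow> (real \<times> real \<Rightarrow> real) \<Rightarrow> bool" where
  "dyadic_pou chi rho \<longleftrightarrow>
     smooth_fn chi \<and> smooth_fn rho \<and>
     (\<forall>\<xi>. 0 \<le> chi \<xi> \<and> 0 \<le> rho \<xi>) \<and>
     (\<forall>\<xi> \<eta>. norm \<xi> = norm \<eta> \<longrightarrow> chi \<xi> = chi \<eta> \<and> rho \<xi> = rho \<eta>) \<and>
     (\<forall>\<xi>. chi \<xi> \<noteq> 0 \<longrightarrow> norm \<xi> \<le> 4/3) \<and>
     (\<forall>\<xi>. rho \<xi> \<noteq> 0 \<longrightarrow> 3/4 \<le> norm \<xi> \<and> norm \<xi> \<le> 8/3) \<and>
     (\<forall>\<xi>. chi \<xi> + (\<Sum>j. rho ((2 powr (- real j)) *\<^sub>R \<xi>)) = 1)"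

text \<open>Block multiplier rho_{n-1}: n = 0 gives rho_{-1} = chi, n = j+1 gives rho(2^{-j} .).\<close>
definition lp_mult :: "(real \<times> real \<Rightarrow> real) \<Rightarrow> (real \<times> real \<Rightarrow> real) \<Rightarrow> nat \<Rightarrow> real \<times> real \<Rightarrow> real" where
  "lp_mult chi rho n \<xi> = (if n = 0 then chi \<xi> else rho ((2 powr (- real (n - 1))) *\<^sub>R \<xi>))"

text \<open>Littlewood--Paley block Delta_{n-1} f of a distribution with Fourier coefficients fh.\<close>
definition lp_block :: "(real \<times> real \<Rightarrow> real) \<Rightarrow> (real \<times> real \<Rightarrow> real) \<Rightarrow> nat
    \<Rightarrow> (int \<times> int \<Rightarrow> complex) \<Rightarrow> real \<times> real \<Rightarrow> complex" where
  "lp_block chi rho n fh x =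
     (\<Sum>k\<in>{k. lp_mult chi rho n (real_of_int (fst k), real_of_int (snd k)) \<noteq> 0}.
        complex_of_real (lp_mult chi rho n (real_of_int (fst k), real_of_int (snd k))) * fh k
        * cis (2 * pi * (real_of_int (fst k) * fst x + real_of_int (snd k) * snd x)))"

text \<open>Besov norm B^{s}_{infinity,infinity}(T^2) (here s = -kappa):
  sup over j >= -1 of 2^{j s} sup_x |Delta_j f(x)|.\<close>
definition besov_inf_norm :: "(real \<times> real \<Rightarrow> real) \<Rightarrow> (real \<times> real \<Rightarrow> real) \<Rightarrow> real
    \<Rightarrow> (int \<times> int \<Rightarrow> complex) \<Rightarrow> ennreal" where
  "besov_inf_norm chi rho s fh =
     (SUP n. SUP x. ennreal (2 powr ((real n - 1) * s) * cmod (lp_block chi rho n fh x)))"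

definition enn_powr :: "ennreal \<Rightarrow> real \<Rightarrow> ennreal" where
  "enn_powr x p = (if x = \<infinity> then \<infinity> else ennreal (enn2real x powr p))"

end

theory Submission
  imports Defs
begin

definition wt :: "int \<times> int \<Rightarrow> real" where "wt k = 1 + zsq k"

lemma zsq_nonneg: "zsq k \<ge> 0" by (simp add: zsq_def)
lemma wt_ge1: "wt k \<ge> 1" by (simp add: wt_def zsq_nonneg)
lemma wt_pos: "wt k > 0" using wt_ge1[of k] by linarith

lemma sum1d_nat:
  assumes "u > 1/2"
  shows "summable (\<lambda>n::nat. (1 + (real n)\<^sup>2) powr (-u))"
proof (rule summable_comparison_test')
  have "summable (\<lambda>n::nat. real n powr (-2*u))" using assms by (simp add: summable_real_powr_iff)
  hence "summable (\<lambda>n::nat. real (Suc n) powr (-2*u))" by (subst summable_Suc_iff)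
  thus "summable (\<lambda>n::nat. 2 powr u * real (Suc n) powr (-2*u))" by (rule summable_mult)
  show "norm ((1 + (real n)\<^sup>2) powr (-u)) \<le> 2 powr u * real (Suc n) powr (-2*u)" for n
  proof -
    have "0 \<le> (real n - 1)\<^sup>2" by simp
    hence "(real (Suc n))\<^sup>2 \<le> 2 * (1 + (real n)\<^sup>2)" by (simp add: power2_eq_square algebra_simps)
    hence "((real (Suc n))\<^sup>2) powr u \<le> (2 * (1 + (real n)\<^sup>2)) powr u"
      using assms by (intro powr_mono2) auto
    moreover have "((real (Suc n))\<^sup>2) powr u = real (Suc n) powr (2*u)"
    proof -
      have e: "(real (Suc n))\<^sup>2 = real (Suc n) powr 2" by (simp only: powr_numeral of_nat_0_le_iff)
      show ?thesis by (subst e) (simp only: powr_powr)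
    qed
    moreover have "(2 * (1 + (real n)\<^sup>2)) powr u = 2 powr u * (1 + (real n)\<^sup>2) powr u"
      by (rule powr_mult)
    ultimately have "real (Suc n) powr (2*u) \<le> 2 powr u * (1 + (real n)\<^sup>2) powr u"
      by simp
    moreover have "1 + (real n)\<^sup>2 > 0" by (simp add: add_pos_nonneg)
    hence "(1 + (real n)\<^sup>2) powr u > 0" "real (Suc n) powr (2*u) > 0" by auto
    ultimately have "(1 + (real n)\<^sup>2) powr (-u) \<le> 2 powr u * real (Suc n) powr (-2*u)"
      by (simp add: powr_minus field_simps)
    thus ?thesis by simp
  qed
qed

lemma sum1d:
  assumes "u > 1/2"
  shows "(\<lambda>a::int. (1 + (real_of_int a)\<^sup>2) powr (-u)) summable_on UNIV"
proof -
  let ?f = "\<lambda>a::int. (1 + (real_of_int a)\<^sup>2) powr (-u)"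
  have nat: "(\<lambda>n::nat. (1 + (real n)\<^sup>2) powr (-u)) summable_on UNIV"
    using sum1d_nat[OF assms] by (subst summable_on_UNIV_nonneg_real_iff) auto
  have A: "?f summable_on (range int)"
    by (subst summable_on_reindex) (use nat in \<open>auto simp: o_def\<close>)
  have B: "?f summable_on (range (\<lambda>n::nat. - int n))"
    by (subst summable_on_reindex) (use nat in \<open>auto simp: o_def inj_on_def\<close>)
  have U: "range int \<union> range (\<lambda>n::nat. - int n) = UNIV"
  proof -
    have "x \<in> range int \<union> range (\<lambda>n::nat. - int n)" for x :: int
    proof (cases "x \<ge> 0")
      case True then show ?thesis by (metis UnI1 nonneg_int_cases rangeI)
    next
      case False then have "x = - int (nat (-x))" by simp
      then show ?thesis by blast
    qed
    thus ?thesis by auto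
  qed
  show ?thesis using summable_on_union[OF A B] by (simp only: U)
qed

lemma sum_wt:
  assumes "s > 1"
  shows "(\<lambda>k. wt k powr (-s)) summable_on UNIV"
proof -
  let ?g = "\<lambda>a::int. (1 + (real_of_int a)\<^sup>2) powr (-(s/2))"
  have g: "?g summable_on UNIV" using assms by (intro sum1d) auto
  have prod0: "(\<lambda>k::int\<times>int. ?g (fst k) * ?g (snd k)) summable_on Sigma UNIV (\<lambda>_. UNIV)"
  proof (rule summable_on_SigmaI[where g = "\<lambda>a. ?g a * infsum ?g UNIV"])
    show "((\<lambda>y. ?g (fst (x, y)) * ?g (snd (x, y))) has_sum ?g x * infsum ?g UNIV) UNIV" for x
      using g by (simp add: has_sum_cmult_right)
    show "(\<lambda>a. ?g a * infsum ?g UNIV) summable_on UNIV"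
      using g by (rule summable_on_cmult_left)
  qed auto
  have prod: "(\<lambda>k::int\<times>int. ?g (fst k) * ?g (snd k)) summable_on UNIV"
    using prod0 by simp
  show ?thesis
  proof (rule summable_on_comparison_test[OF prod])
    fix k :: "int \<times> int"
    obtain a b where k: "k = (a, b)" by force
    let ?A = "1 + (real_of_int a)\<^sup>2" and ?B = "1 + (real_of_int b)\<^sup>2"
    have aux: "(1 + x) * (1 + y) \<le> (1 + x + y)\<^sup>2" if "x \<ge> 0" "y \<ge> 0" for x y :: real
    proof -
      have "0 \<le> x * x + y * y + x * y + x + y" using that by simp
      thus ?thesis by (simp add: power2_eq_square algebra_simps)
    qed
    have "?A * ?B \<le> (wt k)\<^sup>2"
      using aux[of "(real_of_int a)\<^sup>2" "(real_of_int b)\<^sup>2"] by (simp add: k wt_def zsq_def add.assoc)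
    hence "(?A * ?B) powr (s/2) \<le> ((wt k)\<^sup>2) powr (s/2)"
      using assms by (intro powr_mono2) auto
    also have "\<dots> = wt k powr s"
    proof -
      have "(wt k)\<^sup>2 = wt k powr 2" using wt_pos[of k] by (simp add: powr_numeral)
      thus ?thesis by (simp add: powr_powr)
    qed
    moreover have "?A > 0" "?B > 0" by (simp_all add: add_pos_nonneg)
    ultimately have "?A powr (s/2) * ?B powr (s/2) \<le> wt k powr s" by (simp add: powr_mult)
    moreover have "?A powr (s/2) > 0" "?B powr (s/2) > 0" using \<open>?A > 0\<close> \<open>?B > 0\<close> by auto
    ultimately have "wt k powr (-s) \<le> ?A powr (-(s/2)) * ?B powr (-(s/2))"
      using wt_pos[of k] by (simp add: powr_minus field_simps)
    thus "wt k powr (-s) \<le> ?g (fst k) * ?g (snd k)" by (simp add: k)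
    show "0 \<le> wt k powr (-s)" by simp
  qed
qed

lemma zsub_inv: "zsub k (zsub k l) = l" by (simp add: zsub_def)

lemma wt_sub: "wt k \<le> 2 * wt l + 2 * wt (zsub k l)"
proof -
  have h: "(x::real)\<^sup>2 \<le> 2 * y\<^sup>2 + 2 * (x - y)\<^sup>2" for x y
  proof -
    have "0 \<le> (x - 2*y)\<^sup>2" by simp
    thus ?thesis by (simp add: power2_eq_square algebra_simps)
  qed
  have "zsq k \<le> 2 * zsq l + 2 * zsq (zsub k l)"
    using h[of "real_of_int (fst k)" "real_of_int (fst l)"] h[of "real_of_int (snd k)" "real_of_int (snd l)"]
    by (simp add: zsq_def zsub_def)
  thus ?thesis by (simp add: wt_def)
qed

lemma wt_summable_sub:
  assumes "s > 1"
  shows "(\<lambda>l. wt (zsub k l) powr (-s)) summable_on UNIV"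
    and "infsum (\<lambda>l. wt (zsub k l) powr (-s)) UNIV = infsum (\<lambda>l. wt l powr (-s)) UNIV"
proof -
  show "(\<lambda>l. wt (zsub k l) powr (-s)) summable_on UNIV"
    using sum_wt[OF assms]
    by (subst summable_on_reindex_bij_witness[where i="zsub k" and j="zsub k" and T=UNIV
          and h="\<lambda>l. wt l powr (-s)"]) (auto simp: zsub_inv)
  show "infsum (\<lambda>l. wt (zsub k l) powr (-s)) UNIV = infsum (\<lambda>l. wt l powr (-s)) UNIV"
    by (rule infsum_reindex_bij_witness[where i="zsub k" and j="zsub k"]) (auto simp: zsub_inv)
qed

lemma pw_aux:
  fixes a b W t :: real
  assumes "1 \<le> a" "a \<le> b" "0 \<le> W" "W \<le> 4 * b" "0 < t" "t < 1"
  shows "W powr t / (a * b) \<le> 4 * (a powr (-(2/(1+t))) + b powr (-2))"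
proof -
  let ?r = "2/(1+t)" and ?q = "2/(1-t)"
  have "W powr t \<le> (4 * b) powr t" using assms by (intro powr_mono2) auto
  also have "\<dots> = 4 powr t * b powr t" by (rule powr_mult)
  also have "\<dots> \<le> 4 * b powr t"
  proof -
    have "4 powr t \<le> 4 powr 1" using assms by (intro powr_mono) auto
    thus ?thesis using assms by (intro mult_right_mono) auto
  qed
  finally have W: "W powr t \<le> 4 * b powr t" .
  have b: "b powr t / (a * b) = (1/a) * b powr (t - 1)"
    using assms by (simp add: powr_diff field_simps)
  have Y: "(1/a) * b powr (t - 1) \<le> (1/a) powr ?r / ?r + (b powr (t-1)) powr ?q / ?q"
    using assms by (intro Youngs_inequality) (auto simp: field_simps)
  have e1: "(1/a) powr ?r = a powr (-?r)" using assms by (simp add: powr_minus_divide powr_divide)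
  have e2: "(b powr (t-1)) powr ?q = b powr (-2)"
  proof -
    have "(t - 1) * (2 / (1 - t)) = -2" using assms by (simp add: field_simps)
    thus ?thesis by (simp add: powr_powr)
  qed
  have r1: "?r \<ge> 1" "?q \<ge> 1" using assms by (auto simp: field_simps)
  have dle: "x / r \<le> x" if "0 \<le> x" "1 \<le> r" for x r :: real
    using divide_left_mono[of 1 r x] that by simp
  have "(1/a) powr ?r / ?r \<le> (1/a) powr ?r" using r1 by (intro dle) auto
  moreover have "(b powr (t-1)) powr ?q / ?q \<le> (b powr (t-1)) powr ?q" using r1 by (intro dle) auto
  ultimately have Y2: "(1/a) * b powr (t - 1) \<le> a powr (-?r) + b powr (-2)"
    using Y e1 e2 by linarith
  have "W powr t / (a * b) \<le> 4 * b powr t / (a * b)"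
    using W assms by (intro divide_right_mono) auto
  also have "\<dots> = 4 * ((1/a) * b powr (t - 1))" using b by simp
  also have "\<dots> \<le> 4 * (a powr (-?r) + b powr (-2))" using Y2 by simp
  finally show ?thesis .
qed

lemma Chat_pos: "m > 0 \<Longrightarrow> 0 < Chat m k"
  unfolding Chat_def using zsq_nonneg[of k] by (simp add: add_pos_nonneg)

lemma Chat_le:
  assumes "m > 0"
  shows "Chat m k \<le> (1 / min m 1) / wt k"
proof -
  have "1 \<le> pi" using pi_gt3 by simp
  hence "1 \<le> pi^2" by simp
  hence pi1: "1 \<le> 4 * pi^2" by linarith
  have "min m 1 * (1 + zsq k) \<le> m + 4 * pi^2 * zsq k"
  proof -
    have "min m 1 * zsq k \<le> 1 * zsq k" using zsq_nonneg[of k] by (intro mult_right_mono) auto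
    also have "\<dots> \<le> 4 * pi^2 * zsq k" using pi1 zsq_nonneg[of k] by (intro mult_right_mono) auto
    finally show ?thesis by (simp add: algebra_simps)
  qed
  moreover have "min m 1 > 0" using assms by simp
  moreover have "0 < m + 4 * pi^2 * zsq k" using assms zsq_nonneg[of k] by (simp add: add_pos_nonneg)
  ultimately have "1 / (m + 4 * pi^2 * zsq k) \<le> 1 / (min m 1 * (1 + zsq k))"
    using zsq_nonneg[of k] by (intro divide_left_mono) (auto intro!: mult_pos_pos add_pos_nonneg)
  thus ?thesis unfolding Chat_def wt_def by simp
qed

lemma pw_full:
  fixes t :: real
  assumes "0 < t" "t < 1"
  shows "wt k powr t / (wt l * wt (zsub k l)) \<le>
     4 * (wt l powr (-(2/(1+t))) + wt (zsub k l) powr (-(2/(1+t))) + wt l powr (-2) + wt (zsub k l) powr (-2))"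
proof (cases "wt l \<le> wt (zsub k l)")
  case True
  have "wt k powr t / (wt l * wt (zsub k l)) \<le> 4 * (wt l powr (-(2/(1+t))) + wt (zsub k l) powr (-2))"
    using wt_sub[of k l] True assms wt_ge1[of l] wt_ge1[of k] by (intro pw_aux) auto
  moreover have "0 \<le> wt (zsub k l) powr (-(2/(1+t)))" "0 \<le> wt l powr (-2)" by simp_all
  ultimately show ?thesis by (smt (verit, best))
next
  case False
  have "wt k powr t / (wt (zsub k l) * wt l) \<le> 4 * (wt (zsub k l) powr (-(2/(1+t))) + wt l powr (-2))"
    using wt_sub[of k l] False assms wt_ge1[of "zsub k l"] wt_ge1[of k] by (intro pw_aux) auto
  hence "wt k powr t / (wt l * wt (zsub k l)) \<le> 4 * (wt (zsub k l) powr (-(2/(1+t))) + wt l powr (-2))"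
    by (simp add: mult.commute)
  moreover have "0 \<le> wt l powr (-(2/(1+t)))" "0 \<le> wt (zsub k l) powr (-2)" by simp_all
  ultimately show ?thesis by (smt (verit, best))
qed

lemma C2hat_bound:
  assumes "m > 0" "0 < t" "t < 1"
  shows "\<exists>K\<ge>0. \<forall>k. C2hat m k \<le> K * wt k powr (-t)"
proof -
  define c where "c = 1 / min m 1"
  define r where "r = 2/(1+t)"
  have r1: "r > 1" using assms by (simp add: r_def field_simps)
  define Zr where "Zr = infsum (\<lambda>l. wt l powr (-r)) UNIV"
  define Z2 where "Z2 = infsum (\<lambda>l. wt l powr (-2)) UNIV"
  have c0: "c > 0" using assms by (simp add: c_def)
  have Zr0: "Zr \<ge> 0" "Z2 \<ge> 0" unfolding Zr_def Z2_def by (auto intro: infsum_nonneg)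
  define K where "K = c\<^sup>2 * 4 * (2 * Zr + 2 * Z2)"
  have "C2hat m k \<le> K * wt k powr (-t)" for k
  proof -
    define S where "S l = wt l powr (-r) + wt (zsub k l) powr (-r) + wt l powr (-2) + wt (zsub k l) powr (-2)" for l
    have sS: "S summable_on UNIV" unfolding S_def
      by (intro summable_on_add sum_wt wt_summable_sub r1) auto
    have iS: "infsum S UNIV = 2 * Zr + 2 * Z2" unfolding S_def Zr_def Z2_def
      by (subst infsum_add, (intro summable_on_add sum_wt wt_summable_sub r1; simp)+)+
         (simp add: wt_summable_sub r1)
    define H where "H l = (c\<^sup>2 * 4 * wt k powr (-t)) * S l" for l
    have sH: "H summable_on UNIV" unfolding H_def by (intro summable_on_cmult_right sS)
    have iH: "infsum H UNIV = K * wt k powr (-t)" unfolding H_def K_def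
      by (subst infsum_cmult_right) (use sS iS in auto)
    have FH: "Chat m l * Chat m (zsub k l) \<le> H l" for l
    proof -
      have "Chat m l * Chat m (zsub k l) \<le> (c / wt l) * (c / wt (zsub k l))"
        using Chat_le[OF assms(1), of l] Chat_le[OF assms(1), of "zsub k l"]
          Chat_pos[OF assms(1), of "zsub k l"] c0 wt_pos[of l] unfolding c_def
        by (intro mult_mono) auto
      also have "\<dots> = c\<^sup>2 * wt k powr (-t) * (wt k powr t / (wt l * wt (zsub k l)))"
        using wt_pos[of k] by (simp add: powr_minus field_simps power2_eq_square)
      also have "\<dots> \<le> c\<^sup>2 * wt k powr (-t) * (4 * S l)"
        using pw_full[OF assms(2,3), of k l] unfolding S_def r_def by (intro mult_left_mono) auto
      finally show ?thesis by (simp add: H_def mult_ac)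
    qed
    have sF: "(\<lambda>l. Chat m l * Chat m (zsub k l)) summable_on UNIV"
      by (rule summable_on_comparison_test[OF sH]) (use FH in \<open>auto intro!: less_imp_le mult_pos_pos Chat_pos[OF assms(1)]\<close>)
    have "C2hat m k \<le> infsum H UNIV" unfolding C2hat_def
      by (rule infsum_mono[OF sF sH]) (use FH in auto)
    thus ?thesis using iH by simp
  qed
  moreover have "K \<ge> 0" unfolding K_def using Zr0 by simp
  ultimately show ?thesis by blast
qed

definition kv :: "int \<times> int \<Rightarrow> real \<times> real" where
  "kv k = (real_of_int (fst k), real_of_int (snd k))"

definition Bset :: "(real \<times> real \<Rightarrow> real) \<Rightarrow> (real \<times> real \<Rightarrow> real) \<Rightarrow> nat \<Rightarrow> (int \<times> int) set" where
  "Bset chi rho n = {k. lp_mult chi rho n (kv k) \<noteq> 0}"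

definition box :: "nat \<Rightarrow> (int \<times> int) set" where
  "box n = {-(2^(n+1))..2^(n+1)} \<times> {-(2^(n+1))..2^(n+1)}"

lemma finite_box: "finite (box n)" by (simp add: box_def)

lemma card_box: "real (card (box n)) \<le> 9 * 4 ^ (n+1)"
proof -
  have "card (box n) = (nat (2 * 2^(n+1) + 1))^2"
    by (simp add: box_def card_cartesian_product power2_eq_square)
  also have "\<dots> = (2 * 2^(n+1) + 1)^2" by (simp add: nat_power_eq[symmetric] nat_add_distrib nat_mult_distrib)
  finally have "real (card (box n)) = (2 * 2^(n+1) + 1)^2" by simp
  also have "\<dots> \<le> (3 * 2^(n+1))^2"
  proof -
    have "(1::real) \<le> 2^(n+1)" by (rule one_le_power) simp
    thus ?thesis by (intro power_mono) auto
  qed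
  also have "\<dots> = 9 * ((2::real)*2)^(n+1)" by (simp only: power_mult_distrib power2_eq_square)
  also have "\<dots> = 9 * 4^(n+1)" by simp
  finally show ?thesis .
qed

context
  fixes chi rho :: "real \<times> real \<Rightarrow> real"
  assumes pou: "dyadic_pou chi rho"
begin

lemma series_finite:
  "finite {j. rho ((2 powr (- real j)) *\<^sub>R \<xi>) \<noteq> 0}"
proof -
  have "{j. rho ((2 powr (- real j)) *\<^sub>R \<xi>) \<noteq> 0} \<subseteq> {..nat \<lceil>2 * norm \<xi>\<rceil>}"
  proof
    fix j assume "j \<in> {j. rho ((2 powr (- real j)) *\<^sub>R \<xi>) \<noteq> 0}"
    hence "3/4 \<le> norm ((2 powr (- real j)) *\<^sub>R \<xi>)" using pou unfolding dyadic_pou_def by blast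
    hence "3/4 \<le> 2 powr (- real j) * norm \<xi>" by simp
    hence "3/4 \<le> norm \<xi> / 2^j" by (simp add: powr_minus powr_realpow divide_simps)
    hence "3/4 * 2^j \<le> norm \<xi>" by (simp add: field_simps)
    moreover have "real j < 2^j"
    proof -
      have "j < 2^j" by (rule less_exp)
      hence "real j < real (2^j)" by (simp only: of_nat_less_iff)
      thus ?thesis by simp
    qed
    ultimately have "real j \<le> 2 * norm \<xi>" by linarith
    thus "j \<in> {..nat \<lceil>2 * norm \<xi>\<rceil>}" by (simp add: nat_le_iff) linarith
  qed
  thus ?thesis by (rule finite_subset) simp
qed

lemma series_summable: "summable (\<lambda>j. rho ((2 powr (- real j)) *\<^sub>R \<xi>))"
  by (rule summable_finite[OF series_finite[of \<xi>]]) auto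

lemma chi_nonneg: "0 \<le> chi \<xi>"
  using pou unfolding dyadic_pou_def by blast
lemma rho_nonneg: "0 \<le> rho \<xi>"
  using pou unfolding dyadic_pou_def by blast

lemma rho_le1: "rho \<xi> \<le> 1" and chi_le1: "chi \<xi> \<le> 1"
proof -
  have eq: "chi \<xi> + (\<Sum>j. rho ((2 powr (- real j)) *\<^sub>R \<xi>)) = 1" using pou unfolding dyadic_pou_def by blast
  have "sum (\<lambda>j. rho ((2 powr (- real j)) *\<^sub>R \<xi>)) {0} \<le> (\<Sum>j. rho ((2 powr (- real j)) *\<^sub>R \<xi>))"
    by (rule sum_le_suminf[OF series_summable]) (auto simp: rho_nonneg)
  hence "rho \<xi> \<le> (\<Sum>j. rho ((2 powr (- real j)) *\<^sub>R \<xi>))" by simp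
  thus "rho \<xi> \<le> 1" using eq chi_nonneg[of \<xi>] by linarith
  have "0 \<le> (\<Sum>j. rho ((2 powr (- real j)) *\<^sub>R \<xi>))"
    by (rule suminf_nonneg[OF series_summable]) (simp add: rho_nonneg)
  thus "chi \<xi> \<le> 1" using eq by linarith
qed

lemma lp_mult_nonneg: "0 \<le> lp_mult chi rho n \<xi>"
  by (simp add: lp_mult_def chi_nonneg rho_nonneg)

lemma lp_mult_le1: "lp_mult chi rho n \<xi> \<le> 1"
  by (simp add: lp_mult_def chi_le1 rho_le1)

lemma lp_mult_sym: "lp_mult chi rho n (- \<xi>) = lp_mult chi rho n \<xi>"
proof -
  have r: "norm \<xi> = norm \<eta> \<Longrightarrow> chi \<xi> = chi \<eta> \<and> rho \<xi> = rho \<eta>" for \<xi> \<eta>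
    using pou unfolding dyadic_pou_def by blast
  have a: "rho (c *\<^sub>R (- \<xi>)) = rho (c *\<^sub>R \<xi>)" for c using r[of "c *\<^sub>R (- \<xi>)" "c *\<^sub>R \<xi>"] by simp
  have b: "chi (- \<xi>) = chi \<xi>" using r[of "- \<xi>" \<xi>] by simp
  show ?thesis unfolding lp_mult_def using a b by simp
qed

lemma chi_supp: "chi \<xi> \<noteq> 0 \<Longrightarrow> norm \<xi> \<le> 4/3"
  using pou unfolding dyadic_pou_def by blast
lemma rho_supp: "rho \<xi> \<noteq> 0 \<Longrightarrow> norm \<xi> \<le> 8/3"
  using pou unfolding dyadic_pou_def by blast

lemma lp_mult_supp:
  assumes "lp_mult chi rho n \<xi> \<noteq> 0"
  shows "norm \<xi> \<le> 2 ^ (n+1)"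
proof (cases "n = 0")
  case True
  then have "norm \<xi> \<le> 4/3" using assms chi_supp unfolding lp_mult_def by simp
  thus ?thesis using True by simp
next
  case False
  then have "norm ((2 powr (- real (n - 1))) *\<^sub>R \<xi>) \<le> 8/3"
    using assms rho_supp[of "(2 powr (- real (n - 1))) *\<^sub>R \<xi>"] False unfolding lp_mult_def by argo
  hence "norm \<xi> / 2^(n-1) \<le> 8/3" by (simp add: powr_minus powr_realpow divide_simps)
  hence "norm \<xi> \<le> 8/3 * 2^(n-1)" by (simp add: field_simps)
  also have "\<dots> \<le> 4 * 2^(n-1)" by simp
  also have "\<dots> = 2^(n+1)" using False by (cases n) simp_all
  finally show ?thesis .
qed

lemma Bset_box: "Bset chi rho n \<subseteq> box n"
proof
  fix k assume "k \<in> Bset chi rho n"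
  hence h: "norm (kv k) \<le> 2^(n+1)" using lp_mult_supp unfolding Bset_def by blast
  have "\<bar>real_of_int (fst k)\<bar> \<le> 2^(n+1)" using h norm_fst_le[of "real_of_int (fst k)" "real_of_int (snd k)"]
    by (simp add: kv_def)
  hence "real_of_int \<bar>fst k\<bar> \<le> real_of_int (2^(n+1))" by simp
  hence a: "\<bar>fst k\<bar> \<le> 2^(n+1)" by (simp only: of_int_le_iff)
  have "\<bar>real_of_int (snd k)\<bar> \<le> 2^(n+1)" using h norm_snd_le[of "real_of_int (snd k)" "real_of_int (fst k)"]
    by (simp add: kv_def)
  hence "real_of_int \<bar>snd k\<bar> \<le> real_of_int (2^(n+1))" by simp
  hence b: "\<bar>snd k\<bar> \<le> 2^(n+1)" by (simp only: of_int_le_iff)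
  show "k \<in> box n" using a b unfolding box_def by (cases k) (auto simp: abs_le_iff)
qed

lemma finite_Bset: "finite (Bset chi rho n)"
  using Bset_box finite_box finite_subset by blast

lemma card_Bset: "real (card (Bset chi rho n)) \<le> 9 * 4 ^ (n+1)"
proof -
  have "card (Bset chi rho n) \<le> card (box n)" by (rule card_mono[OF finite_box Bset_box])
  hence "real (card (Bset chi rho n)) \<le> real (card (box n))" by (simp only: of_nat_le_iff)
  thus ?thesis using card_box[of n] by linarith
qed

lemma kv_zneg: "kv (zneg k) = - kv k" by (simp add: kv_def zneg_def)

lemma Bset_zneg: "zneg k \<in> Bset chi rho n \<longleftrightarrow> k \<in> Bset chi rho n"
  by (simp add: Bset_def kv_zneg lp_mult_sym)

end

lemma zneg_zneg[simp]: "zneg (zneg k) = k" by (simp add: zneg_def)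

lemma sum_real_sym:
  assumes "finite S" "\<And>k. k \<in> S \<Longrightarrow> zneg k \<in> S" "\<And>k. k \<in> S \<Longrightarrow> f (zneg k) = cnj (f k)"
  shows "Im (sum f S) = 0"
proof -
  have "cnj (sum f S) = sum (\<lambda>k. cnj (f k)) S" by simp
  also have "\<dots> = sum (\<lambda>k. f (zneg k)) S" using assms(3) by simp
  also have "\<dots> = sum f S"
    by (rule sum.reindex_bij_witness[where i=zneg and j=zneg]) (auto simp: assms(2))
  finally have "cnj (sum f S) = sum f S" .
  moreover have "cnj z = z \<Longrightarrow> Im z = 0" for z :: complex by (simp add: complex_eq_iff)
  ultimately show ?thesis by blast
qed

definition cf :: "nat \<Rightarrow> real" where "cf r = fact (2*r) / (2^r * fact r)"

lemma cf_pos: "cf r > 0" by (simp add: cf_def)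

locale setting =
  fixes M :: "'w measure" and Qh :: "'w \<Rightarrow> int \<times> int \<Rightarrow> complex"
    and m \<kappa> p :: real and chi rho :: "real \<times> real \<Rightarrow> real"
  assumes prob: "prob_space M"
    and mpos: "m > 0"
    and real_field: "\<forall>\<omega>\<in>space M. \<forall>k. Qh \<omega> (zneg k) = cnj (Qh \<omega> k)"
    and gaussian: "\<And>a :: int \<times> int \<Rightarrow> complex.
        finite {k. a k \<noteq> 0} \<Longrightarrow> (\<forall>k. a (zneg k) = cnj (a k)) \<Longrightarrow> (\<exists>k. a k \<noteq> 0) \<Longrightarrow>
        distributed M lborel (\<lambda>\<omega>. Re (\<Sum>k\<in>{k. a k \<noteq> 0}. a k * Qh \<omega> k))
          (\<lambda>x. ennreal (normal_density 0
             (sqrt (\<Sum>k\<in>{k. a k \<noteq> 0}. (cmod (a k))\<^sup>2 * Ghat m k)) x))"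
    and kpos: "\<kappa> > 0" and p1: "p \<ge> 1"
    and pou: "dyadic_pou chi rho"
begin

definition Xa :: "(int \<times> int \<Rightarrow> complex) \<Rightarrow> 'w \<Rightarrow> real" where
  "Xa a \<omega> = Re (\<Sum>k\<in>{k. a k \<noteq> 0}. a k * Qh \<omega> k)"

definition Va :: "(int \<times> int \<Rightarrow> complex) \<Rightarrow> real" where
  "Va a = (\<Sum>k\<in>{k. a k \<noteq> 0}. (cmod (a k))\<^sup>2 * Ghat m k)"

lemma C2hat_nonneg: "0 \<le> C2hat m k"
proof -
  have "0 \<le> Chat m l * Chat m (zsub k l)" for l
    using Chat_pos[OF mpos, of l] Chat_pos[OF mpos, of "zsub k l"] by simp
  thus ?thesis unfolding C2hat_def by (intro infsum_nonneg) auto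
qed

lemma Ghat_nonneg: "0 \<le> Ghat m k"
  unfolding Ghat_def using C2hat_nonneg[of k] by simp

lemma Ghat_le2: "Ghat m k \<le> 2"
  unfolding Ghat_def using C2hat_nonneg[of k] by (simp add: divide_le_eq)

lemma Ghat_le: "Ghat m k \<le> 2 * C2hat m k"
  unfolding Ghat_def using C2hat_nonneg[of k] by (simp add: divide_le_eq mult_le_cancel_left1)

lemma Va_nonneg: "0 \<le> Va a"
  unfolding Va_def by (intro sum_nonneg mult_nonneg_nonneg Ghat_nonneg) auto

lemma gmom:
  assumes fin: "finite {k. a k \<noteq> 0}" and sym: "\<forall>k. a (zneg k) = cnj (a k)" and r: "r \<ge> 1"
  shows "Xa a \<in> borel_measurable M"
    and "(\<integral>\<^sup>+\<omega>. ennreal ((Xa a \<omega>)^(2*r)) \<partial>M) \<le> ennreal (cf r * (Va a)^r)"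
proof -
  have "Xa a \<in> borel_measurable M \<and> (\<integral>\<^sup>+\<omega>. ennreal ((Xa a \<omega>)^(2*r)) \<partial>M) \<le> ennreal (cf r * (Va a)^r)"
  proof (cases "\<exists>k. a k \<noteq> 0")
    case False
    hence e: "{k. a k \<noteq> 0} = {}" by auto
    have "Xa a = (\<lambda>_. 0)" unfolding Xa_def e by simp
    moreover have z: "(0::real)^(2*r) = 0" by (rule zero_power) (use r in simp)
    ultimately have "(\<integral>\<^sup>+\<omega>. ennreal ((Xa a \<omega>)^(2*r)) \<partial>M) = 0" by (simp only: z) simp
    thus ?thesis using \<open>Xa a = (\<lambda>_. 0)\<close> by (simp only: zero_le conj_absorb) simp
  next
    case True
    note D = gaussian[OF fin sym True]
    have D': "distributed M lborel (Xa a) (\<lambda>x. ennreal (normal_density 0 (sqrt (Va a)) x))"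
      using D unfolding Xa_def[abs_def] Va_def .
    have meas: "Xa a \<in> borel_measurable M"
      using distributed_measurable[OF D'] by simp
    have "(\<integral>\<^sup>+\<omega>. ennreal ((Xa a \<omega>)^(2*r)) \<partial>M)
        = (\<integral>\<^sup>+x. ennreal (normal_density 0 (sqrt (Va a)) x) * ennreal (x^(2*r)) \<partial>lborel)"
      by (rule distributed_nn_integral[OF D', symmetric]) simp
    also have "\<dots> \<le> ennreal (cf r * (Va a)^r)"
    proof (cases "Va a = 0")
      case True
      hence "\<And>x. normal_density 0 (sqrt (Va a)) x = 0" by (simp add: normal_density_def)
      thus ?thesis by simp
    next
      case False
      hence Vp: "Va a > 0" using Va_nonneg[of a] by simp
      have "(\<integral>\<^sup>+x. ennreal (normal_density 0 (sqrt (Va a)) x) * ennreal (x^(2*r)) \<partial>lborel)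
          = (\<integral>\<^sup>+x. ennreal (normal_density 0 (sqrt (Va a)) x * (x - 0)^(2*r)) \<partial>lborel)"
        by (intro nn_integral_cong) (simp add: ennreal_mult[symmetric] zero_le_even_power)
      also have "\<dots> = ennreal (fact (2 * r) / ((2 / (sqrt (Va a))\<^sup>2)^r * fact r))"
      proof -
        have sp: "sqrt (Va a) > 0" using Vp by simp
        note I = normal_moment_even[where \<sigma>="sqrt (Va a)" and \<mu>=0 and k=r, OF sp]
        show ?thesis
          by (rule nn_integral_eq_integral[OF integrable.intros[OF I], 
                unfolded has_bochner_integral_integral_eq[OF I]])
             (simp add: zero_le_even_power)
      qed
      also have "fact (2 * r) / ((2 / (sqrt (Va a))\<^sup>2)^r * fact r) = cf r * (Va a)^r"
        using Vp by (simp add: cf_def power_divide field_simps)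
      finally show ?thesis by simp
    qed
    finally show ?thesis using meas by simp
  qed
  thus "Xa a \<in> borel_measurable M" "(\<integral>\<^sup>+\<omega>. ennreal ((Xa a \<omega>)^(2*r)) \<partial>M) \<le> ennreal (cf r * (Va a)^r)"
    by auto
qed

end

lemma cis_lip: "cmod (cis a - cis b) \<le> \<bar>a - b\<bar>"
proof -
  have "(cmod (cis a - cis b))\<^sup>2 = (cos a - cos b)\<^sup>2 + (sin a - sin b)\<^sup>2"
    by (simp add: cmod_power2)
  also have "\<dots> = 2 - 2 * cos (a - b)"
    by (simp add: cos_diff power2_eq_square algebra_simps)
  also have "\<dots> = 4 * (sin ((a - b)/2))\<^sup>2"
  proof -
    have h: "2 * ((a - b) / 2) = a - b" by simp
    show ?thesis using cos_double_sin[of "(a-b)/2"] unfolding h by simp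
  qed
  also have "\<dots> \<le> 4 * ((a - b)/2)\<^sup>2"
  proof -
    have "(sin ((a-b)/2))\<^sup>2 \<le> ((a-b)/2)\<^sup>2" using abs_sin_x_le_abs_x[of "(a-b)/2"] by (simp only: abs_le_square_iff)
    thus ?thesis by simp
  qed
  also have "\<dots> = (a - b)\<^sup>2" by (simp add: power2_eq_square field_simps)
  finally have "(cmod (cis a - cis b))\<^sup>2 \<le> (a - b)\<^sup>2" by simp
  hence "\<bar>cmod (cis a - cis b)\<bar> \<le> \<bar>a - b\<bar>" by (simp only: abs_le_square_iff)
  thus ?thesis by simp
qed

lemma cis_shift:
  fixes k1 k2 a b :: int
  shows "cis (2 * pi * (real_of_int k1 * (y1 - real_of_int a) + real_of_int k2 * (y2 - real_of_int b)))
       = cis (2 * pi * (real_of_int k1 * y1 + real_of_int k2 * y2))"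
proof -
  have e: "2 * pi * (real_of_int k1 * (y1 - real_of_int a) + real_of_int k2 * (y2 - real_of_int b))
     = 2 * pi * (real_of_int k1 * y1 + real_of_int k2 * y2) + 2 * pi * real_of_int (- (k1 * a + k2 * b))"
    by (simp add: algebra_simps)
  have z: "cis (2 * pi * real_of_int (- (k1 * a + k2 * b))) = 1" by (rule cis_multiple_2pi) simp
  show ?thesis unfolding e by (simp only: cis_mult[symmetric] z mult_1_right)
qed

lemma max_pow_le:
  fixes f :: "'a \<Rightarrow> real"
  assumes "finite S" "S \<noteq> {}" "\<And>x. x \<in> S \<Longrightarrow> 0 \<le> f x"
  shows "(Max (f ` S))^q \<le> (\<Sum>x\<in>S. (f x)^q)"
proof -
  have "Max (f ` S) \<in> f ` S" using assms by (intro Max_in) auto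
  then obtain y where y: "y \<in> S" "Max (f ` S) = f y" by auto
  have "(f y)^q \<le> (\<Sum>x\<in>S. (f x)^q)"
    using assms y by (intro member_le_sum) auto
  thus ?thesis using y by simp
qed

lemma sum_pow_le:
  fixes f :: "'a \<Rightarrow> real"
  assumes "finite S" "\<And>x. x \<in> S \<Longrightarrow> 0 \<le> f x" "q \<ge> 1"
  shows "(\<Sum>x\<in>S. f x)^q \<le> (real (card S))^q * (\<Sum>x\<in>S. (f x)^q)"
proof (cases "S = {}")
  case True then show ?thesis using assms(3) by (cases q) auto
next
  case False
  have "(\<Sum>x\<in>S. f x) \<le> (\<Sum>x\<in>S. Max (f ` S))" using assms by (intro sum_mono) auto
  also have "\<dots> = real (card S) * Max (f ` S)" by simp
  finally have "(\<Sum>x\<in>S. f x)^q \<le> (real (card S) * Max (f ` S))^q"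
    using assms by (intro power_mono) (auto intro: sum_nonneg)
  also have "\<dots> = (real (card S))^q * (Max (f ` S))^q" by (simp add: power_mult_distrib)
  also have "\<dots> \<le> (real (card S))^q * (\<Sum>x\<in>S. (f x)^q)"
    using max_pow_le[OF assms(1) False assms(2)] by (intro mult_left_mono) auto
  finally show ?thesis .
qed

lemma add_pow_le:
  fixes a b :: real
  assumes "0 \<le> a" "0 \<le> b"
  shows "(a + b)^q \<le> 2^q * (a^q + b^q)"
proof -
  have "(a + b)^q \<le> (2 * max a b)^q" using assms by (intro power_mono) auto
  also have "\<dots> = 2^q * (max a b)^q" by (simp add: power_mult_distrib)
  also have "\<dots> \<le> 2^q * (a^q + b^q)"
    using assms by (intro mult_left_mono) (auto simp: max_def)
  finally show ?thesis .
qed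

lemma enn_bound:
  fixes B :: ennreal and v :: "nat \<Rightarrow> real" and q :: nat and p :: real
  assumes "B \<le> (SUP n. ennreal (v n))" "\<And>n. 0 \<le> v n" "1 \<le> p" "p \<le> real q"
  shows "enn_powr B p \<le> 1 + (\<Sum>n. ennreal ((v n)^q))"
proof (cases "(\<Sum>n. ennreal ((v n)^q)) = \<infinity>")
  case True then show ?thesis by simp
next
  case False
  define s where "s = enn2real (\<Sum>n. ennreal ((v n)^q))"
  have S: "(\<Sum>n. ennreal ((v n)^q)) = ennreal s" unfolding s_def
    by (rule ennreal_enn2real[symmetric]) (use False in \<open>simp add: less_top\<close>)
  have s0: "0 \<le> s" by (simp add: s_def)
  have q1: "q \<ge> 1" using assms by linarith
  have vs: "v n \<le> s powr (1 / real q)" for n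
  proof -
    have "ennreal ((v n)^q) \<le> (\<Sum>n. ennreal ((v n)^q))"
      using sum_le_suminf[OF summableI, where f="\<lambda>n. ennreal ((v n)^q)" and I="{n}"] by simp
    hence vq: "(v n)^q \<le> s" using S s0 by (simp add: ennreal_le_iff)
    show ?thesis
    proof (cases "v n = 0")
      case True then show ?thesis by simp
    next
      case False
      hence vp: "v n > 0" using assms(2)[of n] by simp
      have "v n = ((v n)^q) powr (1 / real q)"
        using vp q1 by (simp add: powr_realpow[symmetric] powr_powr)
      also have "\<dots> \<le> s powr (1 / real q)" using vq vp by (intro powr_mono2) auto
      finally show ?thesis .
    qed
  qed
  have "(SUP n. ennreal (v n)) \<le> ennreal (s powr (1 / real q))"
    by (rule SUP_least) (simp add: ennreal_leI vs)
  with assms(1) have Bb: "B \<le> ennreal (s powr (1 / real q))" by (rule order_trans)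
  have "ennreal (s powr (1 / real q)) < \<infinity>" by simp
  with Bb have "B < \<infinity>" by (rule le_less_trans)
  then obtain b where b0: "B = ennreal b" "0 \<le> b" by (cases B rule: ennreal_cases) auto
  have b1: "b \<le> s powr (1 / real q)" using Bb b0 by (simp add: ennreal_le_iff)
  have "b powr p \<le> 1 + s"
  proof (cases "b \<le> 1")
    case True
    hence "b powr p \<le> 1 powr p" using b0 assms by (intro powr_mono2) auto
    thus ?thesis using s0 by simp
  next
    case False
    hence "b powr p \<le> b powr (real q)" using assms by (intro powr_mono) auto
    also have "\<dots> \<le> (s powr (1 / real q)) powr (real q)" using b0 b1 q1 by (intro powr_mono2) auto
    also have "\<dots> = s" using q1 s0 by (simp add: powr_powr)
    finally show ?thesis by simp
  qed
  hence "ennreal (b powr p) \<le> ennreal (1 + s)" by (rule ennreal_leI)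
  moreover have "enn_powr B p = ennreal (b powr p)" unfolding enn_powr_def b0(1) using b0(2) by simp
  moreover have "ennreal (1 + s) = 1 + (\<Sum>n. ennreal ((v n)^q))" using S s0 by simp
  ultimately show ?thesis by simp
qed

definition theta :: "int \<times> int \<Rightarrow> real \<times> real \<Rightarrow> real" where
  "theta k x = 2 * pi * (real_of_int (fst k) * fst x + real_of_int (snd k) * snd x)"

definition grid :: "nat \<Rightarrow> (real \<times> real) set" where
  "grid P = (\<lambda>(i, j). (real i / real P, real j / real P)) ` ({..<P} \<times> {..<P})"

lemma finite_grid: "finite (grid P)" by (simp add: grid_def)
lemma card_grid: "card (grid P) \<le> P * P"
  unfolding grid_def using card_image_le[of "{..<P} \<times> {..<P}"] by (simp add: card_cartesian_product)
lemma grid_ne: "P > 0 \<Longrightarrow> grid P \<noteq> {}" by (auto simp: grid_def)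

lemma grid_near1:
  assumes "P > 0" "0 \<le> y" "y < 1"
  shows "\<exists>i<P. \<bar>y - real i / real P\<bar> \<le> 1 / real P"
proof -
  define i where "i = nat \<lfloor>real P * y\<rfloor>"
  have fl: "real_of_int \<lfloor>real P * y\<rfloor> \<le> real P * y" "real P * y < real_of_int \<lfloor>real P * y\<rfloor> + 1"
    by linarith+
  have nn: "0 \<le> \<lfloor>real P * y\<rfloor>" using assms by simp
  hence ii: "real i = real_of_int \<lfloor>real P * y\<rfloor>" unfolding i_def by simp
  have "real P * y < real P" using assms by simp
  hence "real i < real P" using ii fl by linarith
  hence "i < P" by simp
  moreover have "\<bar>y - real i / real P\<bar> \<le> 1 / real P"
  proof -
    have "real i \<le> real P * y" "real P * y < real i + 1" using ii fl by auto
    hence "0 \<le> real P * y - real i" "real P * y - real i \<le> 1" by auto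
    hence "\<bar>real P * y - real i\<bar> \<le> 1" by simp
    moreover have "y - real i / real P = (real P * y - real i) / real P" using assms by (simp add: field_simps)
    ultimately show ?thesis using assms by (simp add: abs_div divide_right_mono)
  qed
  ultimately show ?thesis by blast
qed

context setting
begin

definition aco :: "nat \<Rightarrow> real \<times> real \<Rightarrow> int \<times> int \<Rightarrow> complex" where
  "aco n x k = complex_of_real (lp_mult chi rho n (kv k)) * cis (theta k x)"

lemma aco_supp: "{k. aco n x k \<noteq> 0} = Bset chi rho n"
  by (auto simp: aco_def Bset_def)

lemma finite_aco: "finite {k. aco n x k \<noteq> 0}"
  unfolding aco_supp by (rule finite_Bset[OF pou])

lemma theta_zneg: "theta (zneg k) x = - theta k x"
  by (simp add: theta_def zneg_def algebra_simps)

lemma aco_sym: "\<forall>k. aco n x (zneg k) = cnj (aco n x k)"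
proof
  fix k
  have "lp_mult chi rho n (kv (zneg k)) = lp_mult chi rho n (kv k)"
    by (simp only: kv_zneg[OF pou] lp_mult_sym[OF pou])
  thus "aco n x (zneg k) = cnj (aco n x k)" by (simp add: aco_def theta_zneg cis_cnj)
qed

lemma block_eq: "lp_block chi rho n fh x = (\<Sum>k\<in>Bset chi rho n. aco n x k * fh k)"
  unfolding lp_block_def Bset_def aco_def kv_def theta_def
  by (intro sum.cong) (auto simp: mult_ac)

lemma block_real:
  assumes "\<omega> \<in> space M"
  shows "cmod (lp_block chi rho n (Qh \<omega>) x) = \<bar>Xa (aco n x) \<omega>\<bar>"
proof -
  have "Im (\<Sum>k\<in>Bset chi rho n. aco n x k * Qh \<omega> k) = 0"
  proof (rule sum_real_sym)
    show "finite (Bset chi rho n)" by (rule finite_Bset[OF pou])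
    show "zneg k \<in> Bset chi rho n" if "k \<in> Bset chi rho n" for k
      using that Bset_zneg[OF pou] by blast
    show "aco n x (zneg k) * Qh \<omega> (zneg k) = cnj (aco n x k * Qh \<omega> k)" for k
    proof -
      have "aco n x (zneg k) = cnj (aco n x k)" using aco_sym by blast
      moreover have "Qh \<omega> (zneg k) = cnj (Qh \<omega> k)" using real_field assms by blast
      ultimately show ?thesis by simp
    qed
  qed
  moreover have "cmod z = \<bar>Re z\<bar>" if "Im z = 0" for z
    using that by (simp add: cmod_def)
  ultimately show ?thesis unfolding block_eq Xa_def aco_supp by simp
qed

definition sig2 :: "nat \<Rightarrow> real" where
  "sig2 n = (\<Sum>k\<in>box n. Ghat m k)"

lemma Va_aco: "Va (aco n x) \<le> sig2 n"
proof -
  have "Va (aco n x) = (\<Sum>k\<in>Bset chi rho n. (lp_mult chi rho n (kv k))\<^sup>2 * Ghat m k)"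
    unfolding Va_def aco_supp by (simp add: aco_def norm_mult)
  also have "\<dots> \<le> (\<Sum>k\<in>Bset chi rho n. Ghat m k)"
  proof (rule sum_mono)
    fix k
    have "(lp_mult chi rho n (kv k))\<^sup>2 \<le> 1"
      using lp_mult_nonneg[OF pou] lp_mult_le1[OF pou] by (simp add: power_le_one)
    thus "(lp_mult chi rho n (kv k))\<^sup>2 * Ghat m k \<le> Ghat m k"
      using Ghat_nonneg[of k] by (simp add: mult_left_le_one_le)
  qed
  also have "\<dots> \<le> sig2 n" unfolding sig2_def
    by (rule sum_mono2[OF finite_box Bset_box[OF pou]]) (simp add: Ghat_nonneg)
  finally show ?thesis .
qed

lemma block_lip:
  "cmod (lp_block chi rho n fh x - lp_block chi rho n fh y)
     \<le> 2 * pi * (\<bar>fst x - fst y\<bar> + \<bar>snd x - snd y\<bar>) * 2^(n+1) * (\<Sum>k\<in>Bset chi rho n. cmod (fh k))"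
proof -
  let ?L = "2 * pi * (\<bar>fst x - fst y\<bar> + \<bar>snd x - snd y\<bar>) * 2^(n+1)"
  have "lp_block chi rho n fh x - lp_block chi rho n fh y
      = (\<Sum>k\<in>Bset chi rho n. complex_of_real (lp_mult chi rho n (kv k)) * fh k * (cis (theta k x) - cis (theta k y)))"
    unfolding block_eq aco_def sum_subtractf[symmetric] by (intro sum.cong) (auto simp: algebra_simps)
  also have "cmod \<dots> \<le> (\<Sum>k\<in>Bset chi rho n. cmod (complex_of_real (lp_mult chi rho n (kv k)) * fh k * (cis (theta k x) - cis (theta k y))))"
    by (rule norm_sum)
  also have "\<dots> \<le> (\<Sum>k\<in>Bset chi rho n. ?L * cmod (fh k))"
  proof (rule sum_mono)
    fix k assume kB: "k \<in> Bset chi rho n"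
    have a: "\<bar>real_of_int (fst k)\<bar> \<le> 2^(n+1)" "\<bar>real_of_int (snd k)\<bar> \<le> 2^(n+1)"
    proof -
      have "k \<in> box n" using kB Bset_box[OF pou] by blast
      hence "\<bar>fst k\<bar> \<le> 2^(n+1)" "\<bar>snd k\<bar> \<le> 2^(n+1)" unfolding box_def by (auto simp: abs_le_iff)
      hence "real_of_int \<bar>fst k\<bar> \<le> real_of_int (2^(n+1))" "real_of_int \<bar>snd k\<bar> \<le> real_of_int (2^(n+1))"
        by (simp_all only: of_int_le_iff)
      thus "\<bar>real_of_int (fst k)\<bar> \<le> 2^(n+1)" "\<bar>real_of_int (snd k)\<bar> \<le> 2^(n+1)" by simp_all
    qed
    have "cmod (cis (theta k x) - cis (theta k y)) \<le> \<bar>theta k x - theta k y\<bar>" by (rule cis_lip)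
    also have "\<dots> = 2 * pi * \<bar>real_of_int (fst k) * (fst x - fst y) + real_of_int (snd k) * (snd x - snd y)\<bar>"
    proof -
      have "theta k x - theta k y = (2 * pi) * (real_of_int (fst k) * (fst x - fst y) + real_of_int (snd k) * (snd x - snd y))"
        by (simp add: theta_def algebra_simps)
      thus ?thesis by (simp only: abs_mult) simp
    qed
    also have "\<dots> \<le> 2 * pi * (\<bar>real_of_int (fst k)\<bar> * \<bar>fst x - fst y\<bar> + \<bar>real_of_int (snd k)\<bar> * \<bar>snd x - snd y\<bar>)"
      by (intro mult_left_mono) (auto simp: abs_mult[symmetric] intro: order_trans[OF abs_triangle_ineq])
    also have "\<dots> \<le> 2 * pi * (2^(n+1) * \<bar>fst x - fst y\<bar> + 2^(n+1) * \<bar>snd x - snd y\<bar>)"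
      using a by (intro mult_left_mono add_mono mult_right_mono) auto
    also have "\<dots> = ?L" by (simp add: algebra_simps)
    finally have c: "cmod (cis (theta k x) - cis (theta k y)) \<le> ?L" .
    have "cmod (complex_of_real (lp_mult chi rho n (kv k)) * fh k * (cis (theta k x) - cis (theta k y)))
        = \<bar>lp_mult chi rho n (kv k)\<bar> * cmod (fh k) * cmod (cis (theta k x) - cis (theta k y))"
      by (simp add: norm_mult)
    also have "\<dots> \<le> 1 * cmod (fh k) * ?L"
      using lp_mult_nonneg[OF pou] lp_mult_le1[OF pou] c
      by (intro mult_mono) auto
    finally show "cmod (complex_of_real (lp_mult chi rho n (kv k)) * fh k * (cis (theta k x) - cis (theta k y)))
        \<le> ?L * cmod (fh k)" by (simp add: mult_ac)
  qed
  also have "\<dots> = ?L * (\<Sum>k\<in>Bset chi rho n. cmod (fh k))" by (simp add: sum_distrib_left)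
  finally show ?thesis .
qed

lemma block_periodic:
  "lp_block chi rho n fh (frac (fst x), frac (snd x)) = lp_block chi rho n fh x"
proof -
  have "theta k (frac (fst x), frac (snd x)) = 2 * pi * (real_of_int (fst k) * (fst x - real_of_int \<lfloor>fst x\<rfloor>)
       + real_of_int (snd k) * (snd x - real_of_int \<lfloor>snd x\<rfloor>))" for k
    by (simp add: theta_def frac_def)
  hence "cis (theta k (frac (fst x), frac (snd x))) = cis (theta k x)" for k
    using cis_shift by (simp add: theta_def)
  thus ?thesis unfolding block_eq aco_def by simp
qed

lemma block_grid:
  assumes "P > 0"
  shows "cmod (lp_block chi rho n fh x) \<le> Max ((\<lambda>g. cmod (lp_block chi rho n fh g)) ` grid P)
           + 4 * pi * 2^(n+1) / real P * (\<Sum>k\<in>Bset chi rho n. cmod (fh k))"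
proof -
  let ?x = "(frac (fst x), frac (snd x))"
  obtain i where i: "i < P" "\<bar>frac (fst x) - real i / real P\<bar> \<le> 1 / real P"
    using grid_near1[OF assms, of "frac (fst x)"] frac_lt_1 by auto
  obtain j where j: "j < P" "\<bar>frac (snd x) - real j / real P\<bar> \<le> 1 / real P"
    using grid_near1[OF assms, of "frac (snd x)"] frac_lt_1 by auto
  define g where "g = (real i / real P, real j / real P)"
  have gG: "g \<in> grid P" unfolding g_def grid_def using i j by auto
  let ?Y = "\<Sum>k\<in>Bset chi rho n. cmod (fh k)"
  have Y0: "0 \<le> ?Y" by (simp add: sum_nonneg)
  have "cmod (lp_block chi rho n fh x) = cmod (lp_block chi rho n fh ?x)" by (simp add: block_periodic)
  also have "\<dots> \<le> cmod (lp_block chi rho n fh g) + cmod (lp_block chi rho n fh ?x - lp_block chi rho n fh g)"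
    by (rule norm_triangle_sub)
  also have "cmod (lp_block chi rho n fh ?x - lp_block chi rho n fh g)
      \<le> 2 * pi * (\<bar>fst ?x - fst g\<bar> + \<bar>snd ?x - snd g\<bar>) * 2^(n+1) * ?Y" by (rule block_lip)
  also have "\<dots> \<le> 2 * pi * (1 / real P + 1 / real P) * 2^(n+1) * ?Y"
    using i j Y0 unfolding g_def by (intro mult_right_mono mult_left_mono add_mono) auto
  also have "\<dots> = 4 * pi * 2^(n+1) / real P * ?Y" by (simp add: field_simps)
  also have "cmod (lp_block chi rho n fh g) \<le> Max ((\<lambda>g. cmod (lp_block chi rho n fh g)) ` grid P)"
    using gG finite_grid by (intro Max_ge) auto
  finally show ?thesis by simp
qed

end

lemma int_add:
  assumes [measurable]: "f \<in> borel_measurable M" "g \<in> borel_measurable M"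
    and "\<And>x. 0 \<le> f x" "\<And>x. 0 \<le> g x"
    and "(\<integral>\<^sup>+x. ennreal (f x) \<partial>M) \<le> ennreal a" "(\<integral>\<^sup>+x. ennreal (g x) \<partial>M) \<le> ennreal b"
    and "0 \<le> a" "0 \<le> b"
  shows "(\<integral>\<^sup>+x. ennreal (f x + g x) \<partial>M) \<le> ennreal (a + b)"
proof -
  have "(\<integral>\<^sup>+x. ennreal (f x + g x) \<partial>M) = (\<integral>\<^sup>+x. ennreal (f x) + ennreal (g x) \<partial>M)"
    using assms(3,4) by (intro nn_integral_cong) (simp add: ennreal_plus)
  also have "\<dots> = (\<integral>\<^sup>+x. ennreal (f x) \<partial>M) + (\<integral>\<^sup>+x. ennreal (g x) \<partial>M)"
    by (rule nn_integral_add) measurable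
  also have "\<dots> \<le> ennreal a + ennreal b" using assms(5,6) by (rule add_mono)
  also have "\<dots> = ennreal (a + b)" using assms(7,8) by (simp add: ennreal_plus)
  finally show ?thesis .
qed

lemma int_cmult:
  assumes [measurable]: "f \<in> borel_measurable M"
    and "(\<integral>\<^sup>+x. ennreal (f x) \<partial>M) \<le> ennreal a" "0 \<le> c" "0 \<le> a"
  shows "(\<integral>\<^sup>+x. ennreal (c * f x) \<partial>M) \<le> ennreal (c * a)"
proof -
  have "(\<integral>\<^sup>+x. ennreal (c * f x) \<partial>M) = (\<integral>\<^sup>+x. ennreal c * ennreal (f x) \<partial>M)"
    using assms(3) by (intro nn_integral_cong) (simp add: ennreal_mult')
  also have "\<dots> = ennreal c * (\<integral>\<^sup>+x. ennreal (f x) \<partial>M)"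
    by (rule nn_integral_cmult) measurable
  also have "\<dots> \<le> ennreal c * ennreal a" using assms(2) by (rule mult_left_mono) simp
  also have "\<dots> = ennreal (c * a)" using assms(3) by (simp add: ennreal_mult')
  finally show ?thesis .
qed

lemma int_sum:
  assumes "finite I" "\<And>i. i \<in> I \<Longrightarrow> f i \<in> borel_measurable M" "\<And>i x. i \<in> I \<Longrightarrow> 0 \<le> f i x"
    and "\<And>i. i \<in> I \<Longrightarrow> (\<integral>\<^sup>+x. ennreal (f i x) \<partial>M) \<le> ennreal (b i)" "\<And>i. i \<in> I \<Longrightarrow> 0 \<le> b i"
  shows "(\<lambda>x. \<Sum>i\<in>I. f i x) \<in> borel_measurable M \<and> (\<integral>\<^sup>+x. ennreal (\<Sum>i\<in>I. f i x) \<partial>M) \<le> ennreal (\<Sum>i\<in>I. b i)"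
  using assms
proof (induction I rule: finite_induct)
  case empty then show ?case by simp
next
  case (insert j I)
  have IH: "(\<lambda>x. \<Sum>i\<in>I. f i x) \<in> borel_measurable M"
           "(\<integral>\<^sup>+x. ennreal (\<Sum>i\<in>I. f i x) \<partial>M) \<le> ennreal (\<Sum>i\<in>I. b i)"
    using insert by auto
  have mj: "f j \<in> borel_measurable M" using insert by auto
  have "(\<integral>\<^sup>+x. ennreal (f j x + (\<Sum>i\<in>I. f i x)) \<partial>M) \<le> ennreal (b j + (\<Sum>i\<in>I. b i))"
    by (rule int_add[OF mj IH(1) _ _ _ IH(2)]) (use insert in \<open>auto intro: sum_nonneg\<close>)
  moreover have "(\<lambda>x. f j x + (\<Sum>i\<in>I. f i x)) \<in> borel_measurable M" using mj IH(1) by measurable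
  ultimately show ?case using insert by simp
qed

context setting
begin

definition are :: "int \<times> int \<Rightarrow> int \<times> int \<Rightarrow> complex" where
  "are k j = (if j = k then 1/2 else 0) + (if j = zneg k then 1/2 else 0)"
definition aim :: "int \<times> int \<Rightarrow> int \<times> int \<Rightarrow> complex" where
  "aim k j = (if j = k then - \<i>/2 else 0) + (if j = zneg k then \<i>/2 else 0)"

lemma zneg_eq_iff: "zneg j = k \<longleftrightarrow> j = zneg k" by (auto simp: zneg_def)

lemma are_supp: "{j. are k j \<noteq> 0} \<subseteq> {k, zneg k}" by (auto simp: are_def)
lemma aim_supp: "{j. aim k j \<noteq> 0} \<subseteq> {k, zneg k}" by (auto simp: aim_def)
lemma are_fin: "finite {j. are k j \<noteq> 0}" using are_supp by (rule finite_subset) simp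
lemma aim_fin: "finite {j. aim k j \<noteq> 0}" using aim_supp by (rule finite_subset) simp
lemma are_sym: "\<forall>j. are k (zneg j) = cnj (are k j)"
  by (auto simp: are_def zneg_eq_iff)
lemma aim_sym: "\<forall>j. aim k (zneg j) = cnj (aim k j)"
  by (auto simp: aim_def zneg_eq_iff)

lemma sum_superset:
  fixes a z :: "int \<times> int \<Rightarrow> complex"
  assumes "{j. a j \<noteq> 0} \<subseteq> T" "finite T"
  shows "(\<Sum>j\<in>{j. a j \<noteq> 0}. a j * z j) = (\<Sum>j\<in>T. a j * z j)"
  by (rule sum.mono_neutral_left) (use assms in auto)

lemma Xa_are: assumes "\<omega> \<in> space M" shows "Xa (are k) \<omega> = Re (Qh \<omega> k)"
proof -
  have c: "Qh \<omega> (zneg k) = cnj (Qh \<omega> k)" using real_field assms by blast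
  have "Xa (are k) \<omega> = Re (\<Sum>j\<in>{k, zneg k}. are k j * Qh \<omega> j)"
    unfolding Xa_def by (subst sum_superset[OF are_supp]) auto
  also have "\<dots> = Re (Qh \<omega> k)"
  proof (cases "zneg k = k")
    case True then show ?thesis by (simp add: are_def)
  next
    case False
    hence "k \<noteq> zneg k" by metis
    then show ?thesis using False c by (simp add: are_def)
  qed
  finally show ?thesis .
qed

lemma Xa_aim: assumes "\<omega> \<in> space M" shows "Xa (aim k) \<omega> = Im (Qh \<omega> k)"
proof -
  have c: "Qh \<omega> (zneg k) = cnj (Qh \<omega> k)" using real_field assms by blast
  have "Xa (aim k) \<omega> = Re (\<Sum>j\<in>{k, zneg k}. aim k j * Qh \<omega> j)"
    unfolding Xa_def by (subst sum_superset[OF aim_supp]) auto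
  also have "\<dots> = Im (Qh \<omega> k)"
  proof (cases "zneg k = k")
    case True
    hence "Qh \<omega> k = cnj (Qh \<omega> k)" using c by simp
    hence "Im (Qh \<omega> k) = 0" by (metis cnj.sel(2) neg_equal_zero)
    then show ?thesis using True by (simp add: aim_def)
  next
    case False
    hence "k \<noteq> zneg k" by metis
    then show ?thesis using False c by (simp add: aim_def)
  qed
  finally show ?thesis .
qed

lemma Va_small:
  assumes "{j. a j \<noteq> 0} \<subseteq> {k, zneg k}" "\<And>j. cmod (a j) \<le> 1"
  shows "Va a \<le> 4"
proof -
  have "Va a \<le> (\<Sum>j\<in>{j. a j \<noteq> 0}. 2)"
    unfolding Va_def
  proof (rule sum_mono)
    fix j
    have "(cmod (a j))\<^sup>2 \<le> 1" using assms(2)[of j] by (simp add: power_le_one)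
    thus "(cmod (a j))\<^sup>2 * Ghat m j \<le> 2"
      using Ghat_le2[of j] Ghat_nonneg[of j] by (smt (verit) mult_left_le_one_le zero_le_power2)
  qed
  also have "\<dots> = 2 * real (card {j. a j \<noteq> 0})" by simp
  also have "\<dots> \<le> 2 * 2"
  proof -
    have "card {j. a j \<noteq> 0} \<le> card {k, zneg k}" by (rule card_mono[OF _ assms(1)]) simp
    also have "\<dots> \<le> 2" by (simp add: card_insert_le_m1)
    finally show ?thesis by simp
  qed
  finally show ?thesis by simp
qed

lemma Va_are: "Va (are k) \<le> 4"
  by (rule Va_small[OF are_supp]) (auto simp: are_def)
lemma Va_aim: "Va (aim k) \<le> 4"
  by (rule Va_small[OF aim_supp]) (auto simp: aim_def)

end

context setting
begin

lemma wt_box: "k \<in> box n \<Longrightarrow> wt k \<le> 3 * 4^(n+1)"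
proof -
  assume "k \<in> box n"
  hence "\<bar>fst k\<bar> \<le> 2^(n+1)" "\<bar>snd k\<bar> \<le> 2^(n+1)" unfolding box_def by (auto simp: abs_le_iff)
  hence "real_of_int \<bar>fst k\<bar> \<le> real_of_int (2^(n+1))" "real_of_int \<bar>snd k\<bar> \<le> real_of_int (2^(n+1))"
    by (simp_all only: of_int_le_iff)
  hence a: "\<bar>real_of_int (fst k)\<bar> \<le> 2^(n+1)" "\<bar>real_of_int (snd k)\<bar> \<le> 2^(n+1)" by simp_all
  have "(real_of_int (fst k))\<^sup>2 \<le> (2^(n+1))\<^sup>2" "(real_of_int (snd k))\<^sup>2 \<le> (2^(n+1))\<^sup>2"
    using a by (subst abs_le_square_iff[symmetric], simp)+
  moreover have "((2::real)^(n+1))\<^sup>2 = 4^(n+1)"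
  proof -
    have "((2::real)^(n+1))\<^sup>2 = (2*2)^(n+1)" by (simp only: power2_eq_square power_mult_distrib)
    thus ?thesis by simp
  qed
  moreover have "(1::real) \<le> 4^(n+1)" by (rule one_le_power) simp
  ultimately show ?thesis unfolding wt_def zsq_def by linarith
qed

lemma sig2_bound:
  assumes r: "r \<ge> (1::nat)"
  shows "\<exists>C1\<ge>0. \<forall>n. sig2 n \<le> C1 * (3 * 4^(n+1)) powr (1 / real r)"
proof -
  define t where "t = 1 - 1 / (2 * real r)"
  have t: "0 < t" "t < 1" using r by (auto simp: t_def field_simps)
  obtain K where K: "K \<ge> 0" "\<And>k. C2hat m k \<le> K * wt k powr (-t)"
    using C2hat_bound[OF mpos t] by blast
  define s where "s = t + 1 / real r"
  have s1: "s > 1" using r by (simp add: s_def t_def field_simps)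
  define Z where "Z = infsum (\<lambda>k. wt k powr (-s)) UNIV"
  have "sig2 n \<le> (2 * K * Z) * (3 * 4^(n+1)) powr (1 / real r)" for n
  proof -
    define W :: real where "W = 3 * 4^(n+1)"
    have "sig2 n \<le> (\<Sum>k\<in>box n. (2 * K * W powr (1 / real r)) * wt k powr (-s))"
      unfolding sig2_def
    proof (rule sum_mono)
      fix k assume kb: "k \<in> box n"
      have "Ghat m k \<le> 2 * (K * wt k powr (-t))" using Ghat_le[of k] K(2)[of k] by linarith
      also have "wt k powr (-t) = wt k powr (-s) * wt k powr (1 / real r)"
        by (simp add: s_def powr_add[symmetric])
      also have "wt k powr (1 / real r) \<le> W powr (1 / real r)"
        using wt_box[OF kb] wt_pos[of k] unfolding W_def by (intro powr_mono2) auto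
      hence "2 * (K * (wt k powr (-s) * wt k powr (1 / real r))) \<le> 2 * (K * (wt k powr (-s) * W powr (1 / real r)))"
        using K(1) by (intro mult_left_mono) auto
      finally show "Ghat m k \<le> (2 * K * W powr (1 / real r)) * wt k powr (-s)" by (simp add: mult_ac)
    qed
    also have "\<dots> = (2 * K * W powr (1 / real r)) * (\<Sum>k\<in>box n. wt k powr (-s))"
      by (simp add: sum_distrib_left)
    also have "\<dots> \<le> (2 * K * W powr (1 / real r)) * Z"
      unfolding Z_def using K(1)
      by (intro mult_left_mono finite_sum_le_infsum sum_wt s1 finite_box) auto
    finally show ?thesis unfolding W_def by (simp add: mult_ac)
  qed
  moreover have "2 * K * Z \<ge> 0" unfolding Z_def using K(1) infsum_nonneg[of UNIV "\<lambda>k. wt k powr (-s)"] by simp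
  ultimately show ?thesis by blast
qed

end

context setting
begin

definition wn :: "nat \<Rightarrow> real" where "wn n = 2 powr ((real n - 1) * - \<kappa>)"
definition Pn :: "nat \<Rightarrow> nat" where "Pn n = 8^(n+1)"
definition Lc :: "nat \<Rightarrow> real" where "Lc n = 4 * pi * 2^(n+1) / real (Pn n)"

definition hfun :: "nat \<Rightarrow> nat \<Rightarrow> 'w \<Rightarrow> real" where
  "hfun r n \<omega> = wn n ^ (2*r) * 2 ^ (2*r) * (\<Sum>g\<in>grid (Pn n). (Xa (aco n g) \<omega>)^(2*r))
     + wn n ^ (2*r) * 2 ^ (2*r) * Lc n ^ (2*r) * real (card (Bset chi rho n)) ^ (2*r) * 2 ^ (2*r)
       * (\<Sum>k\<in>Bset chi rho n. (Xa (are k) \<omega>)^(2*r) + (Xa (aim k) \<omega>)^(2*r))"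

lemma wn_pos: "wn n > 0" by (simp add: wn_def)
lemma Pn_pos: "Pn n > 0" by (simp add: Pn_def)
lemma Lc_nonneg: "Lc n \<ge> 0" by (simp add: Lc_def)

lemma pointwise:
  assumes r: "r \<ge> 1" and pr: "p \<le> real (2*r)" and \<omega>: "\<omega> \<in> space M"
  shows "enn_powr (besov_inf_norm chi rho (- \<kappa>) (Qh \<omega>)) p \<le> 1 + (\<Sum>n. ennreal (hfun r n \<omega>))"
proof -
  let ?q = "2*r"
  define Mx where "Mx n = Max ((\<lambda>g. cmod (lp_block chi rho n (Qh \<omega>) g)) ` grid (Pn n))" for n
  define Yn where "Yn n = (\<Sum>k\<in>Bset chi rho n. cmod (Qh \<omega> k))" for n
  define v where "v n = wn n * (Mx n + Lc n * Yn n)" for n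
  have Mx0: "0 \<le> Mx n" for n
  proof -
    obtain g where "g \<in> grid (Pn n)" using grid_ne[OF Pn_pos[of n]] by blast
    hence "cmod (lp_block chi rho n (Qh \<omega>) g) \<le> Mx n" unfolding Mx_def using finite_grid by (intro Max_ge) auto
    thus ?thesis by (meson norm_ge_zero order_trans)
  qed
  have Y0: "0 \<le> Yn n" for n unfolding Yn_def by (simp add: sum_nonneg)
  have v0: "0 \<le> v n" for n unfolding v_def using wn_pos[of n] Mx0[of n] Y0[of n] Lc_nonneg[of n] by simp
  have bes: "besov_inf_norm chi rho (- \<kappa>) (Qh \<omega>) \<le> (SUP n. ennreal (v n))"
    unfolding besov_inf_norm_def
  proof (rule SUP_mono)
    fix n
    have "(SUP x. ennreal (2 powr ((real n - 1) * - \<kappa>) * cmod (lp_block chi rho n (Qh \<omega>) x))) \<le> ennreal (v n)"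
    proof (rule SUP_least)
      fix x
      have "cmod (lp_block chi rho n (Qh \<omega>) x) \<le> Mx n + Lc n * Yn n"
        using block_grid[OF Pn_pos[of n], of n "Qh \<omega>" x] unfolding Mx_def Yn_def Lc_def by (simp add: mult_ac)
      hence "wn n * cmod (lp_block chi rho n (Qh \<omega>) x) \<le> v n"
        unfolding v_def using wn_pos[of n] by (intro mult_left_mono) auto
      thus "ennreal (2 powr ((real n - 1) * - \<kappa>) * cmod (lp_block chi rho n (Qh \<omega>) x)) \<le> ennreal (v n)"
        unfolding wn_def by (rule ennreal_leI)
    qed
    thus "\<exists>m\<in>UNIV. (SUP x. ennreal (2 powr ((real n - 1) * - \<kappa>) * cmod (lp_block chi rho n (Qh \<omega>) x))) \<le> ennreal (v m)"
      by blast
  qed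
  have E: "enn_powr (besov_inf_norm chi rho (- \<kappa>) (Qh \<omega>)) p \<le> 1 + (\<Sum>n. ennreal ((v n)^?q))"
    by (rule enn_bound[OF bes v0 p1 pr])
  have vh: "(v n)^?q \<le> hfun r n \<omega>" for n
  proof -
    let ?B = "Bset chi rho n" and ?G = "grid (Pn n)"
    have ev: "even ?q" by simp
    have q1: "?q \<ge> 1" using r by simp
    have "(v n)^?q = wn n ^ ?q * (Mx n + Lc n * Yn n)^?q" unfolding v_def by (simp add: power_mult_distrib)
    also have "\<dots> \<le> wn n ^ ?q * (2^?q * ((Mx n)^?q + (Lc n * Yn n)^?q))"
      using Mx0[of n] Y0[of n] Lc_nonneg[of n] wn_pos[of n] by (intro mult_left_mono add_pow_le) auto
    also have "(Mx n)^?q \<le> (\<Sum>g\<in>?G. (Xa (aco n g) \<omega>)^?q)"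
    proof -
      have "(Mx n)^?q \<le> (\<Sum>g\<in>?G. (cmod (lp_block chi rho n (Qh \<omega>) g))^?q)"
        unfolding Mx_def by (rule max_pow_le[OF finite_grid grid_ne[OF Pn_pos]]) simp
      also have "\<dots> = (\<Sum>g\<in>?G. (Xa (aco n g) \<omega>)^?q)"
        by (simp add: block_real[OF \<omega>] power_even_abs[OF ev])
      finally show ?thesis .
    qed
    also have "(Lc n * Yn n)^?q \<le> Lc n ^ ?q * real (card ?B) ^ ?q * 2^?q
        * (\<Sum>k\<in>?B. (Xa (are k) \<omega>)^?q + (Xa (aim k) \<omega>)^?q)"
    proof -
      have "(Yn n)^?q \<le> real (card ?B) ^ ?q * (\<Sum>k\<in>?B. (cmod (Qh \<omega> k))^?q)"
        unfolding Yn_def by (rule sum_pow_le[OF finite_Bset[OF pou] _ q1]) simp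
      also have "(\<Sum>k\<in>?B. (cmod (Qh \<omega> k))^?q) \<le> (\<Sum>k\<in>?B. 2^?q * ((Xa (are k) \<omega>)^?q + (Xa (aim k) \<omega>)^?q))"
      proof (rule sum_mono)
        fix k
        have "(cmod (Qh \<omega> k))^?q \<le> (\<bar>Re (Qh \<omega> k)\<bar> + \<bar>Im (Qh \<omega> k)\<bar>)^?q"
          by (intro power_mono cmod_le) simp
        also have "\<dots> \<le> 2^?q * (\<bar>Re (Qh \<omega> k)\<bar>^?q + \<bar>Im (Qh \<omega> k)\<bar>^?q)" by (rule add_pow_le) auto
        also have "\<dots> = 2^?q * ((Xa (are k) \<omega>)^?q + (Xa (aim k) \<omega>)^?q)"
          by (simp add: Xa_are[OF \<omega>] Xa_aim[OF \<omega>] power_even_abs[OF ev])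
        finally show "(cmod (Qh \<omega> k))^?q \<le> 2^?q * ((Xa (are k) \<omega>)^?q + (Xa (aim k) \<omega>)^?q)" .
      qed
      finally have "(Yn n)^?q \<le> real (card ?B) ^ ?q * (\<Sum>k\<in>?B. 2^?q * ((Xa (are k) \<omega>)^?q + (Xa (aim k) \<omega>)^?q))"
        by (simp add: mult_left_mono)
      hence "Lc n ^ ?q * (Yn n)^?q \<le> Lc n ^ ?q * (real (card ?B) ^ ?q * (\<Sum>k\<in>?B. 2^?q * ((Xa (are k) \<omega>)^?q + (Xa (aim k) \<omega>)^?q)))"
        using Lc_nonneg[of n] by (intro mult_left_mono) auto
      thus ?thesis by (simp add: power_mult_distrib sum_distrib_left[symmetric] mult_ac)
    qed
    finally show ?thesis unfolding hfun_def
      using wn_pos[of n] by (simp add: algebra_simps)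
  qed
  have "(\<Sum>n. ennreal ((v n)^?q)) \<le> (\<Sum>n. ennreal (hfun r n \<omega>))"
    by (intro suminf_le summableI ennreal_leI vh)
  thus ?thesis using E by (meson add_left_mono order_trans)
qed

end

context setting
begin

definition bd :: "nat \<Rightarrow> nat \<Rightarrow> real" where
  "bd r n = wn n ^ (2*r) * 2 ^ (2*r) * (\<Sum>g\<in>grid (Pn n). cf r * sig2 n ^ r)
     + wn n ^ (2*r) * 2 ^ (2*r) * Lc n ^ (2*r) * real (card (Bset chi rho n)) ^ (2*r) * 2 ^ (2*r)
       * (\<Sum>k\<in>Bset chi rho n. cf r * 4 ^ r + cf r * 4 ^ r)"

lemma sig2_nonneg: "0 \<le> sig2 n" unfolding sig2_def by (simp add: sum_nonneg Ghat_nonneg)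

lemma Xmom:
  assumes fin: "finite {k. a k \<noteq> 0}" and sym: "\<forall>k. a (zneg k) = cnj (a k)" and r: "r \<ge> 1"
    and V: "Va a \<le> V"
  shows "(\<lambda>\<omega>. (Xa a \<omega>)^(2*r)) \<in> borel_measurable M"
    and "(\<integral>\<^sup>+\<omega>. ennreal ((Xa a \<omega>)^(2*r)) \<partial>M) \<le> ennreal (cf r * V^r)"
proof -
  have [measurable]: "Xa a \<in> borel_measurable M" by (rule gmom(1)[OF fin sym r])
  show "(\<lambda>\<omega>. (Xa a \<omega>)^(2*r)) \<in> borel_measurable M" by measurable
  have "cf r * (Va a)^r \<le> cf r * V^r"
    using cf_pos[of r] Va_nonneg[of a] V by (intro mult_left_mono power_mono) auto
  thus "(\<integral>\<^sup>+\<omega>. ennreal ((Xa a \<omega>)^(2*r)) \<partial>M) \<le> ennreal (cf r * V^r)"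
    using gmom(2)[OF fin sym r] by (meson ennreal_leI order_trans)
qed

lemma hint:
  assumes r: "r \<ge> 1"
  shows "hfun r n \<in> borel_measurable M \<and> (\<integral>\<^sup>+\<omega>. ennreal (hfun r n \<omega>) \<partial>M) \<le> ennreal (bd r n)"
proof -
  let ?q = "2*r"
  have S1: "(\<lambda>\<omega>. \<Sum>g\<in>grid (Pn n). (Xa (aco n g) \<omega>)^?q) \<in> borel_measurable M \<and>
     (\<integral>\<^sup>+\<omega>. ennreal (\<Sum>g\<in>grid (Pn n). (Xa (aco n g) \<omega>)^?q) \<partial>M) \<le> ennreal (\<Sum>g\<in>grid (Pn n). cf r * sig2 n ^ r)"
  proof (rule int_sum)
    show "finite (grid (Pn n))" by (rule finite_grid)
    show "(\<lambda>\<omega>. (Xa (aco n g) \<omega>)^?q) \<in> borel_measurable M" for g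
      by (rule Xmom(1)[OF finite_aco aco_sym r Va_aco])
    show "0 \<le> (Xa (aco n g) \<omega>)^?q" for g \<omega> by (simp add: zero_le_even_power)
    show "(\<integral>\<^sup>+\<omega>. ennreal ((Xa (aco n g) \<omega>)^?q) \<partial>M) \<le> ennreal (cf r * sig2 n ^ r)" for g
      by (rule Xmom(2)[OF finite_aco aco_sym r Va_aco])
    show "0 \<le> cf r * sig2 n ^ r" for g using cf_pos[of r] sig2_nonneg[of n] by simp
  qed
  have S2: "(\<lambda>\<omega>. \<Sum>k\<in>Bset chi rho n. (Xa (are k) \<omega>)^?q + (Xa (aim k) \<omega>)^?q) \<in> borel_measurable M \<and>
     (\<integral>\<^sup>+\<omega>. ennreal (\<Sum>k\<in>Bset chi rho n. (Xa (are k) \<omega>)^?q + (Xa (aim k) \<omega>)^?q) \<partial>M)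
        \<le> ennreal (\<Sum>k\<in>Bset chi rho n. cf r * 4 ^ r + cf r * 4 ^ r)"
  proof (rule int_sum)
    show "finite (Bset chi rho n)" by (rule finite_Bset[OF pou])
    fix k
    have m1[measurable]: "(\<lambda>\<omega>. (Xa (are k) \<omega>)^?q) \<in> borel_measurable M"
      by (rule Xmom(1)[OF are_fin are_sym r Va_are])
    have m2[measurable]: "(\<lambda>\<omega>. (Xa (aim k) \<omega>)^?q) \<in> borel_measurable M"
      by (rule Xmom(1)[OF aim_fin aim_sym r Va_aim])
    show "(\<lambda>\<omega>. (Xa (are k) \<omega>)^?q + (Xa (aim k) \<omega>)^?q) \<in> borel_measurable M" by measurable
    show "0 \<le> (Xa (are k) \<omega>)^?q + (Xa (aim k) \<omega>)^?q" for \<omega> by (simp add: zero_le_even_power)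
    show "(\<integral>\<^sup>+\<omega>. ennreal ((Xa (are k) \<omega>)^?q + (Xa (aim k) \<omega>)^?q) \<partial>M) \<le> ennreal (cf r * 4 ^ r + cf r * 4 ^ r)"
      by (rule int_add[OF m1 m2 _ _ Xmom(2)[OF are_fin are_sym r Va_are] Xmom(2)[OF aim_fin aim_sym r Va_aim]])
         (use cf_pos[of r] in \<open>auto simp: zero_le_even_power\<close>)
    show "0 \<le> cf r * 4 ^ r + cf r * 4 ^ r" using cf_pos[of r] by simp
  qed
  let ?A = "wn n ^ ?q * 2 ^ ?q"
  let ?Bc = "wn n ^ ?q * 2 ^ ?q * Lc n ^ ?q * real (card (Bset chi rho n)) ^ ?q * 2 ^ ?q"
  have A0: "0 \<le> ?A" "0 \<le> ?Bc" using wn_pos[of n] Lc_nonneg[of n] by auto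
  have T1: "(\<integral>\<^sup>+\<omega>. ennreal (?A * (\<Sum>g\<in>grid (Pn n). (Xa (aco n g) \<omega>)^?q)) \<partial>M)
      \<le> ennreal (?A * (\<Sum>g\<in>grid (Pn n). cf r * sig2 n ^ r))"
    by (rule int_cmult[OF conjunct1[OF S1] conjunct2[OF S1] A0(1)]) (use cf_pos[of r] sig2_nonneg[of n] in \<open>auto intro: sum_nonneg\<close>)
  have T2: "(\<integral>\<^sup>+\<omega>. ennreal (?Bc * (\<Sum>k\<in>Bset chi rho n. (Xa (are k) \<omega>)^?q + (Xa (aim k) \<omega>)^?q)) \<partial>M)
      \<le> ennreal (?Bc * (\<Sum>k\<in>Bset chi rho n. cf r * 4 ^ r + cf r * 4 ^ r))"
    by (rule int_cmult[OF conjunct1[OF S2] conjunct2[OF S2] A0(2)]) (use cf_pos[of r] in \<open>auto intro: sum_nonneg\<close>)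
  have m1: "(\<lambda>\<omega>. ?A * (\<Sum>g\<in>grid (Pn n). (Xa (aco n g) \<omega>)^?q)) \<in> borel_measurable M"
    using conjunct1[OF S1] by measurable
  have m2: "(\<lambda>\<omega>. ?Bc * (\<Sum>k\<in>Bset chi rho n. (Xa (are k) \<omega>)^?q + (Xa (aim k) \<omega>)^?q)) \<in> borel_measurable M"
    using conjunct1[OF S2] by measurable
  have "(\<integral>\<^sup>+\<omega>. ennreal (hfun r n \<omega>) \<partial>M) \<le> ennreal (bd r n)"
    unfolding hfun_def bd_def
    by (rule int_add[OF m1 m2 _ _ T1 T2])
       (use A0 cf_pos[of r] sig2_nonneg[of n] in \<open>auto intro!: mult_nonneg_nonneg sum_nonneg simp: zero_le_even_power\<close>)
  moreover have "hfun r n \<in> borel_measurable M" unfolding hfun_def using m1 m2 by measurable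
  ultimately show ?thesis by simp
qed

end

context setting
begin

lemma wq_eq: "wn n ^ (2*r) = 2 powr (2*\<kappa>*r) * (2 powr (-(2*\<kappa>*r)))^n"
proof -
  have "wn n ^ (2*r) = 2 powr (real (2*r) * ((real n - 1) * - \<kappa>))"
    unfolding wn_def by (rule powr_power) simp
  also have "real (2*r) * ((real n - 1) * - \<kappa>) = 2*\<kappa>*r + real n * (-(2*\<kappa>*r))"
    by (simp add: algebra_simps)
  also have "2 powr (2*\<kappa>*r + real n * (-(2*\<kappa>*r))) = 2 powr (2*\<kappa>*r) * 2 powr (real n * (-(2*\<kappa>*r)))"
    by (rule powr_add)
  also have "2 powr (real n * (-(2*\<kappa>*r))) = (2 powr (-(2*\<kappa>*r)))^n"
    by (rule powr_power[symmetric]) simp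
  finally show ?thesis .
qed

lemma theta_small:
  assumes "\<kappa> * r \<ge> 8"
  shows "2 powr (-(2*\<kappa>*r)) \<le> 1/65536"
proof -
  have "2 powr (-(2*\<kappa>*r)) \<le> 2 powr (-16)" using assms by (intro powr_mono) auto
  also have "(2::real) powr (-16) = 1/65536" by (simp add: powr_minus powr_numeral)
  finally show ?thesis .
qed

lemma card_grid_Pn: "real (card (grid (Pn n))) \<le> 64 * 64^n"
proof -
  have "card (grid (Pn n)) \<le> Pn n * Pn n" by (rule card_grid)
  hence "real (card (grid (Pn n))) \<le> real (Pn n) * real (Pn n)" by (metis of_nat_le_iff of_nat_mult)
  also have "real (Pn n) * real (Pn n) = 64 * 64^n"
  proof -
    have "real (Pn n) * real (Pn n) = (8*8)^(n+1)" unfolding Pn_def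
      by (simp only: of_nat_power of_nat_numeral power_mult_distrib)
    thus ?thesis by simp
  qed
  finally show ?thesis .
qed

lemma Lc_card: "Lc n * real (card (Bset chi rho n)) \<le> 36 * pi"
proof -
  have "Lc n * real (card (Bset chi rho n)) \<le> Lc n * (9 * 4^(n+1))"
    using card_Bset[OF pou, of n] Lc_nonneg[of n] by (intro mult_left_mono) auto
  also have "\<dots> = 36 * pi * ((2^(n+1) * 4^(n+1)) / 8^(n+1))"
    unfolding Lc_def Pn_def by simp
  also have "(2::real)^(n+1) * 4^(n+1) = 8^(n+1)" by (simp add: power_mult_distrib[symmetric])
  finally show ?thesis by simp
qed

lemma bd_geo:
  assumes r: "r \<ge> 1" and kr: "\<kappa> * r \<ge> 8" and C1: "C1 \<ge> 0" "\<And>n. sig2 n \<le> C1 * (3 * 4^(n+1)) powr (1 / real r)"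
  shows "\<exists>D. \<forall>n. bd r n \<le> D * (1/2)^n"
proof -
  define \<theta> where "\<theta> = 2 powr (-(2*\<kappa>*r))"
  have th: "0 \<le> \<theta>" "\<theta> \<le> 1/65536" unfolding \<theta>_def using theta_small[OF kr] by auto
  define c0 where "c0 = 2 powr (2*\<kappa>*r)"
  have c0: "c0 \<ge> 0" by (simp add: c0_def)
  have wq: "wn n ^ (2*r) = c0 * \<theta>^n" for n unfolding c0_def \<theta>_def by (rule wq_eq)
  have p4: "(2::real)^(2*r) = 4^r" by (simp add: power_mult)
  define K1 where "K1 = c0 * 4^r * 64 * cf r * C1^r * 12"
  define K2 where "K2 = c0 * 4^r * (36*pi)^(2*r) * 4^r * 36 * (2 * cf r * 4^r)"
  have sg: "sig2 n ^ r \<le> C1^r * (12 * 4^n)" for n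
  proof -
    have "sig2 n ^ r \<le> (C1 * (3 * 4^(n+1)) powr (1 / real r))^r"
      using sig2_nonneg[of n] C1(2)[of n] by (intro power_mono) auto
    also have "\<dots> = C1^r * ((3 * 4^(n+1)) powr (1 / real r))^r" by (simp add: power_mult_distrib)
    also have "((3 * 4^(n+1)) powr (1 / real r))^r = (3 * 4^(n+1) :: real)"
    proof -
      have "((3 * 4^(n+1)) powr (1 / real r))^r = (3 * 4^(n+1) :: real) powr (real r * (1 / real r))"
        by (rule powr_power) simp
      also have "real r * (1 / real r) = 1" using r by simp
      finally show ?thesis by simp
    qed
    finally show ?thesis by simp
  qed
  have "bd r n \<le> (K1 + K2) * (1/2)^n" for n
  proof -
    let ?G = "grid (Pn n)" and ?B = "Bset chi rho n"
    have t1: "wn n ^ (2*r) * 2 ^ (2*r) * (\<Sum>g\<in>?G. cf r * sig2 n ^ r) \<le> K1 * (1/2)^n"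
    proof -
      have "wn n ^ (2*r) * 2 ^ (2*r) * (\<Sum>g\<in>?G. cf r * sig2 n ^ r)
          = (c0 * \<theta>^n * 4^r) * (real (card ?G) * (cf r * sig2 n ^ r))" by (simp add: wq p4)
      also have "\<dots> \<le> (c0 * \<theta>^n * 4^r) * ((64 * 64^n) * (cf r * (C1^r * (12 * 4^n))))"
        using c0 th cf_pos[of r] sig2_nonneg[of n] C1 card_grid_Pn[of n] sg[of n]
        by (intro mult_left_mono mult_mono) auto
      also have "\<dots> = K1 * (\<theta> * 256)^n"
      proof -
        have "(\<theta> * (64 * 4))^n = \<theta>^n * 64^n * 4^n" by (simp only: power_mult_distrib mult.assoc)
        hence e: "(\<theta> * 256)^n = \<theta>^n * 64^n * 4^n" by simp
        show ?thesis unfolding K1_def e by (simp add: mult_ac)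
      qed
      also have "\<dots> \<le> K1 * (1/2)^n"
        using th c0 cf_pos[of r] C1 unfolding K1_def by (intro mult_left_mono power_mono) auto
      finally show ?thesis .
    qed
    have t2: "wn n ^ (2*r) * 2 ^ (2*r) * Lc n ^ (2*r) * real (card ?B) ^ (2*r) * 2 ^ (2*r)
         * (\<Sum>k\<in>?B. cf r * 4 ^ r + cf r * 4 ^ r) \<le> K2 * (1/2)^n"
    proof -
      have "wn n ^ (2*r) * 2 ^ (2*r) * Lc n ^ (2*r) * real (card ?B) ^ (2*r) * 2 ^ (2*r)
         * (\<Sum>k\<in>?B. cf r * 4 ^ r + cf r * 4 ^ r)
         = (c0 * \<theta>^n * 4^r) * (Lc n * real (card ?B))^(2*r) * 4^r * (real (card ?B) * (2 * cf r * 4^r))"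
        unfolding wq p4 by (simp add: power_mult_distrib mult_ac)
      also have "\<dots> \<le> (c0 * \<theta>^n * 4^r) * (36*pi)^(2*r) * 4^r * ((36 * 4^n) * (2 * cf r * 4^r))"
      proof -
        let ?a = "c0 * \<theta>^n * 4^r" and ?g = "2 * cf r * 4^r" and ?c = "real (card ?B)"
        have a0: "0 \<le> ?a" using c0 th by simp
        have g0: "0 \<le> ?g" using cf_pos[of r] by simp
        have h1: "(Lc n * ?c)^(2*r) \<le> (36*pi)^(2*r)"
          by (rule power_mono[OF Lc_card]) (simp add: Lc_nonneg)
        have h2: "?c * ?g \<le> (36 * 4^n) * ?g"
          using card_Bset[OF pou, of n] g0 by (intro mult_right_mono) auto
        have "?a * (Lc n * ?c)^(2*r) * 4^r \<le> ?a * (36*pi)^(2*r) * 4^r"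
          by (rule mult_right_mono[OF mult_left_mono[OF h1 a0]]) simp
        hence "?a * (Lc n * ?c)^(2*r) * 4^r * (?c * ?g) \<le> ?a * (36*pi)^(2*r) * 4^r * (?c * ?g)"
          by (rule mult_right_mono) (use g0 in simp)
        also have "\<dots> \<le> ?a * (36*pi)^(2*r) * 4^r * ((36 * 4^n) * ?g)"
          by (rule mult_left_mono[OF h2]) (use a0 in simp)
        finally show ?thesis .
      qed
      also have "\<dots> = K2 * (\<theta> * 4)^n" unfolding K2_def
        by (simp add: power_mult_distrib mult_ac)
      also have "\<dots> \<le> K2 * (1/2)^n"
        using th c0 cf_pos[of r] unfolding K2_def by (intro mult_left_mono power_mono) auto
      finally show ?thesis .
    qed
    show ?thesis unfolding bd_def using t1 t2 by (simp add: distrib_right)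
  qed
  thus ?thesis by blast
qed

end

context setting
begin

lemma bd_nonneg: "0 \<le> bd r n"
  unfolding bd_def using wn_pos[of n] Lc_nonneg[of n] cf_pos[of r] sig2_nonneg[of n]
  by (intro add_nonneg_nonneg mult_nonneg_nonneg sum_nonneg) auto

theorem main: "(\<integral>\<^sup>+ \<omega>. enn_powr (besov_inf_norm chi rho (- \<kappa>) (Qh \<omega>)) p \<partial>M) < \<infinity>"
proof -
  interpret prob_space M by (rule prob)
  define x where "x = 8 / \<kappa> + p"
  have x0: "x > 0" unfolding x_def using kpos p1 by (simp add: add_pos_nonneg)
  define r where "r = nat \<lceil>x\<rceil> + 1"
  have rx: "real r \<ge> x + 1" unfolding r_def using x0 by linarith
  have r1: "r \<ge> 1" unfolding r_def by simp
  have kr: "\<kappa> * r \<ge> 8"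
  proof -
    have "\<kappa> * r \<ge> \<kappa> * x" using rx kpos by (intro mult_left_mono) auto
    also have "\<kappa> * x = 8 + \<kappa> * p" unfolding x_def using kpos by (simp add: field_simps)
    finally show ?thesis using kpos p1 by (smt (verit) mult_nonneg_nonneg)
  qed
  have "8 / \<kappa> > 0" using kpos by simp
  hence "p \<le> x" by (simp add: x_def)
  moreover have "real (2*r) = 2 * real r" by simp
  ultimately have pr: "p \<le> real (2*r)" using rx x0 by linarith
  obtain C1 where C1: "C1 \<ge> 0" "\<And>n. sig2 n \<le> C1 * (3 * 4^(n+1)) powr (1 / real r)"
    using sig2_bound[OF r1] by blast
  obtain D where D: "\<And>n. bd r n \<le> D * (1/2)^n" using bd_geo[OF r1 kr C1] by blast
  have hm[measurable]: "hfun r n \<in> borel_measurable M" for n using hint[OF r1] by blast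
  have sb: "summable (bd r)"
  proof (rule summable_comparison_test')
    show "summable (\<lambda>n. D * (1/2)^n)" by (intro summable_mult summable_geometric) simp
    show "norm (bd r n) \<le> D * (1/2)^n" for n using D[of n] bd_nonneg[of r n] by simp
  qed
  have fin: "(\<Sum>n. ennreal (bd r n)) \<noteq> \<infinity>"
    using ennreal_suminf_neq_top[OF sb bd_nonneg] by simp
  have "(\<integral>\<^sup>+ \<omega>. enn_powr (besov_inf_norm chi rho (- \<kappa>) (Qh \<omega>)) p \<partial>M)
      \<le> (\<integral>\<^sup>+ \<omega>. 1 + (\<Sum>n. ennreal (hfun r n \<omega>)) \<partial>M)"
    by (rule nn_integral_mono) (rule pointwise[OF r1 pr])
  also have "\<dots> = (\<integral>\<^sup>+ \<omega>. 1 \<partial>M) + (\<integral>\<^sup>+ \<omega>. (\<Sum>n. ennreal (hfun r n \<omega>)) \<partial>M)"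
    by (rule nn_integral_add) measurable
  also have "(\<integral>\<^sup>+ \<omega>. 1 \<partial>M) = 1" using emeasure_space_1 by simp
  also have "(\<integral>\<^sup>+ \<omega>. (\<Sum>n. ennreal (hfun r n \<omega>)) \<partial>M) = (\<Sum>n. (\<integral>\<^sup>+ \<omega>. ennreal (hfun r n \<omega>) \<partial>M))"
    by (rule nn_integral_suminf) measurable
  also have "\<dots> \<le> (\<Sum>n. ennreal (bd r n))"
    by (intro suminf_le summableI) (use hint[OF r1] in blast)
  finally have "(\<integral>\<^sup>+ \<omega>. enn_powr (besov_inf_norm chi rho (- \<kappa>) (Qh \<omega>)) p \<partial>M) \<le> 1 + (\<Sum>n. ennreal (bd r n))"
    by simp
  also have "\<dots> < \<infinity>" using fin by (simp add: less_top)
  finally show ?thesis .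
qed

end

theorem lemma4p5:
  fixes M :: "'w measure" and Qh :: "'w \<Rightarrow> int \<times> int \<Rightarrow> complex"
    and m \<kappa> p :: real and chi rho :: "real \<times> real \<Rightarrow> real"
  assumes "prob_space M"
    and "m > 0"
    and real_field: "\<forall>\<omega>\<in>space M. \<forall>k. Qh \<omega> (zneg k) = cnj (Qh \<omega> k)"
    and gaussian: "\<And>a :: int \<times> int \<Rightarrow> complex.
        finite {k. a k \<noteq> 0} \<Longrightarrow> (\<forall>k. a (zneg k) = cnj (a k)) \<Longrightarrow> (\<exists>k. a k \<noteq> 0) \<Longrightarrow>
        distributed M lborel (\<lambda>\<omega>. Re (\<Sum>k\<in>{k. a k \<noteq> 0}. a k * Qh \<omega> k))
          (\<lambda>x. ennreal (normal_density 0
             (sqrt (\<Sum>k\<in>{k. a k \<noteq> 0}. (cmod (a k))\<^sup>2 * Ghat m k)) x))"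
    and "\<kappa> > 0" and "p \<ge> 1"
    and "dyadic_pou chi rho"
  shows "(\<integral>\<^sup>+ \<omega>. enn_powr (besov_inf_norm chi rho (- \<kappa>) (Qh \<omega>)) p \<partial>M) < \<infinity>"
proof -
  interpret setting M Qh m \<kappa> p chi rho
    by (rule setting.intro) (use assms in auto)
  show ?thesis by (rule main)
qed

end
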